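(* Under the standing setting of the context, let $\tau$ be a conforming tree and $\mathbf k$ a finite multiset of elements of $\mathbb N^d$ with $|\mathbf k|\ge1$ and $D^{\mathbf k}\Upsilon^\tau\ne0$. Assume that $|\mathbf k|=1$ or $\beta\le-1$. Then $|\tau|_{\mathfrak s}>|\mathbf k|_{\mathfrak s}-2$.
   Context: Standing setting. Integers $d\ge2$, $n\ge1$; $E$ a finite-dimensional real normed space; $\beta<0$. Scaling $\mathfrak s=(2,1,\dots,1)$, $|k|_{\mathfrak s}=2k_1+k_2+\dots+k_d$ for $k\in\mathbb N^d$; $\mathbb N^d_{<2}=\{k:|k|_{\mathfrak s}<2\}$. Jets: $\widehat{\mathcal J}=E^{\mathbb N^d}$, elements $\boldsymbol\phi=(\nabla^k\phi)_{k\in\mathbb N^d}$; $\mathcal J=E^{\mathbb N^d_{<2}}$, written $\boldsymbol\phi=(\phi,\nabla\phi)$; functions on $\mathcal J$ are viewed as functions on $\widehat{\mathcal J}$ depending on finitely many components. $P:\mathcal J\to E$ is a polynomial such that for some integer $p\ge2$ and linear $F:E^{\otimes p}\to E$, either $P(\boldsymbol\phi)=F(\phi^{\otimes p})$, or $q=(p-1)/2$ is an integer and $P(\boldsymbol\phi)=F(\phi^{\otimes p})+B(\nabla\phi\otimes\phi^{\otimes q})$ for a linear $B$; $\alpha=2/(p-1)$. $f=(f_1,\dots,f_n):\mathcal J\to L(\mathbb R^n,E)$ is smooth. Subcriticality: if $f$ is constant, $\beta>-\alpha-2$; if $f$ is non-constant but independent of $\nabla\phi$, $\beta>-2$; if $f$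 depends on $\nabla\phi$, $\beta>-1$. Derivatives: for $\ell\in\mathbb N^d$, $D^\ell g$ is the derivative of $g$ in the $\ell$-th jet component; for a multiset $\mathbf k=\{k_1,\dots,k_r\}$ of elements of $\mathbb N^d$, $D^{\mathbf k}=D^{k_1}\cdots D^{k_r}$ (values multilinear maps), $|\mathbf k|=r$, $|\mathbf k|_{\mathfrak s}=\sum|k_i|_{\mathfrak s}$; for $i\in[d]$ (unit vector $e_i$), $\partial^ig(\boldsymbol\phi)=\sum_{\ell}D^\ell g(\boldsymbol\phi)(\nabla^{\ell+e_i}\phi)$, and $\partial^k$ is the corresponding composition. Trees: rooted trees with a polynomial label in $\mathbb N^d$ and a noise label in $\{0,\dots,n\}$ on each vertex and a derivative label in $\mathbb N^d$ on each edge, written uniquely (unordered product) as $\tau=X^k\Xi_j\prod_{i=1}^\ell\mathcal I^{k_i}[\tau_i]$: root with polynomial label $k$, noise label $j$, and $\ell$ edges with labels $k_i$ to the roots of subtrees $\tau_i$; $\Xi_0$ is also written $\mathbf 1$. Rules: $\mathfrak R_0=\{\mathbf k: D^{\mathbf k}P\ne0\}$; for $j\ge1$, $\mathfrak R_j=\emptyset$ if $f$ is constant, $\mathfrak R_j=\{\mathbf k:\text{all elements are }0\}$ if $f$ is non-constant and independent of $\nabla\phi$, $\mathfrak R_j=\{\mathbf k:|k|_{\mathfrak s}\le1\ \forall k\in\mathbf k\}$ if $f$ depends on $\nabla\phi$. $\tau$ is conforming if every $\tau_i$ is conforming and $\{k_1,\dots,k_\ell\}\in\mathfrak R_j$ (so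 every $X^k\Xi_j$ is conforming). Homogeneity: $|\Xi_j|_{\mathfrak s}=\beta$ ($j\ge1$), $|\mathbf 1|_{\mathfrak s}=0$, $|X^k\tau|_{\mathfrak s}=|k|_{\mathfrak s}+|\tau|_{\mathfrak s}$, $|\tau\sigma|_{\mathfrak s}=|\tau|_{\mathfrak s}+|\sigma|_{\mathfrak s}$, $|\mathcal I^k[\tau]|_{\mathfrak s}=|\tau|_{\mathfrak s}+2-|k|_{\mathfrak s}$. Elementary differentials $\Upsilon^\tau:\widehat{\mathcal J}\to E$: $\Upsilon^{\Xi_j}=f_j$ ($j\ge1$), $\Upsilon^{\mathbf 1}=P$, and for $\tau=X^k\Xi_j\prod_{i=1}^\ell\mathcal I^{k_i}[\sigma_i]$, $\Upsilon^\tau(\boldsymbol\phi)=\{\partial^k(D^{k_1}\cdots D^{k_\ell}\Upsilon^{\Xi_j})\}(\boldsymbol\phi)(\Upsilon^{\sigma_1}(\boldsymbol\phi),\dots,\Upsilon^{\sigma_\ell}(\boldsymbol\phi))$. *)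

theory Defs
  imports "HOL-Analysis.Analysis"
begin

text \<open>Multi-indices k in N^d are represented as lists of naturals of length d;
  position 0 is the time coordinate (scaling 2), positions 1..d-1 are spatial.\<close>

type_synonym mi = "nat list"

definition mindex :: "nat \<Rightarrow> mi set" where
  "mindex d = {k. length k = d}"

definition sdeg :: "mi \<Rightarrow> nat" where
  "sdeg k = (if k = [] then 0 else 2 * hd k + sum_list (tl k))"

definition sdeg_list :: "mi list \<Rightarrow> nat" where
  "sdeg_list ks = sum_list (map sdeg ks)"

definition zero_mi :: "nat \<Rightarrow> mi" where
  "zero_mi d = replicate d 0"

definition unit_mi :: "nat \<Rightarrow> nat \<Rightarrow> mi" where
  "unit_mi d i = (replicate d 0)[i := 1]"

definition add_unit :: "nat \<Rightarrow> mi \<Rightarrow> mi" where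
  "add_unit i l = l[i := l ! i + 1]"

definition Jidx :: "nat \<Rightarrow> mi set" where
  "Jidx d = {k \<in> mindex d. sdeg k < 2}"

type_synonym 'e jet = "mi \<Rightarrow> 'e"

text \<open>A multilinear-map-valued function on jets is a function
  'e jet \<Rightarrow> 'e list \<Rightarrow> 'e, the list holding the arguments of the multilinear map.
  D^{k_1} ... D^{k_r} G: the first argument belongs to the outermost derivative.\<close>

fun Dks :: "mi list \<Rightarrow> ('e::real_normed_vector jet \<Rightarrow> 'e list \<Rightarrow> 'e) \<Rightarrow> 'e jet \<Rightarrow> 'e list \<Rightarrow> 'e" where
  "Dks [] G = G"
| "Dks (k # ks) G = (\<lambda>\<phi> hs. vector_derivative
       (\<lambda>t::real. Dks ks G (\<phi>(k := \<phi> k + t *\<^sub>R hd hs)) (tl hs)) (at 0))"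

definition lift :: "('e jet \<Rightarrow> 'e) \<Rightarrow> 'e jet \<Rightarrow> 'e list \<Rightarrow> 'e" where
  "lift g = (\<lambda>\<phi> hs. g \<phi>)"

definition Dnonzero :: "mi list \<Rightarrow> ('e::real_normed_vector jet \<Rightarrow> 'e list \<Rightarrow> 'e) \<Rightarrow> bool" where
  "Dnonzero ks G \<longleftrightarrow> (\<exists>\<phi> hs. length hs = length ks \<and> Dks ks G \<phi> hs \<noteq> 0)"

definition pd :: "nat \<Rightarrow> nat \<Rightarrow> ('e::euclidean_space jet \<Rightarrow> 'e list \<Rightarrow> 'e) \<Rightarrow> 'e jet \<Rightarrow> 'e list \<Rightarrow> 'e" where
  "pd d i G = (\<lambda>\<phi> hs. infsum (\<lambda>l. Dks [l] G \<phi> (\<phi> (add_unit i l) # hs)) (mindex d))"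

definition pdk :: "nat \<Rightarrow> mi \<Rightarrow> ('e::euclidean_space jet \<Rightarrow> 'e list \<Rightarrow> 'e) \<Rightarrow> 'e jet \<Rightarrow> 'e list \<Rightarrow> 'e" where
  "pdk d k G = foldr (\<lambda>i H. (pd d i ^^ (k ! i)) H) [0..<d] G"

definition smooth_jet :: "nat \<Rightarrow> ('e::real_normed_vector jet \<Rightarrow> 'e) \<Rightarrow> bool" where
  "smooth_jet d g \<longleftrightarrow>
    (\<forall>ks hs. set ks \<subseteq> mindex d \<longrightarrow>
       continuous_on UNIV (\<lambda>\<phi>. Dks ks (lift g) \<phi> hs) \<and>
       (\<forall>k h \<phi>. k \<in> mindex d \<longrightarrow>
          ((\<lambda>t::real. Dks ks (lift g) (\<phi>(k := \<phi> k + t *\<^sub>R h)) hs)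
             has_vector_derivative Dks (k # ks) (lift g) \<phi> (h # hs)) (at 0)))"

definition on_J :: "nat \<Rightarrow> ('e jet \<Rightarrow> 'a) \<Rightarrow> bool" where
  "on_J d g \<longleftrightarrow> (\<forall>\<phi> \<psi>. (\<forall>l\<in>Jidx d. \<phi> l = \<psi> l) \<longrightarrow> g \<phi> = g \<psi>)"

definition multilin :: "nat \<Rightarrow> ('e::real_vector list \<Rightarrow> 'e) \<Rightarrow> bool" where
  "multilin m F \<longleftrightarrow> (\<forall>xs i. length xs = m \<longrightarrow> i < m \<longrightarrow> linear (\<lambda>x. F (xs[i := x])))"

text \<open>F(phi^{\<otimes>p}), F a linear map on E^{\<otimes>p} = multilinear map on E^p\<close>
definition Fterm :: "nat \<Rightarrow> nat \<Rightarrow> ('e list \<Rightarrow> 'e) \<Rightarrow> 'e jet \<Rightarrow> 'e" where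
  "Fterm d p F \<phi> = F (replicate p (\<phi> (zero_mi d)))"

text \<open>B(nabla phi \<otimes> phi^{\<otimes>q}), a linear map on E^{d-1} \<otimes> E^{\<otimes>q} given by its
  components B_i (i = 1..d-1) which are multilinear maps on E^{q+1}\<close>
definition Bterm :: "nat \<Rightarrow> nat \<Rightarrow> (nat \<Rightarrow> 'e list \<Rightarrow> 'e) \<Rightarrow> 'e::real_vector jet \<Rightarrow> 'e" where
  "Bterm d q B \<phi> = (\<Sum>i\<in>{1..<d}. B i (\<phi> (unit_mi d i) # replicate q (\<phi> (zero_mi d))))"

definition f_const :: "nat \<Rightarrow> (nat \<Rightarrow> 'e jet \<Rightarrow> 'e) \<Rightarrow> bool" where
  "f_const n f \<longleftrightarrow> (\<forall>j\<in>{1..n}. \<forall>\<phi> \<psi>. f j \<phi> = f j \<psi>)"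

definition f_indep_grad :: "nat \<Rightarrow> nat \<Rightarrow> (nat \<Rightarrow> 'e jet \<Rightarrow> 'e) \<Rightarrow> bool" where
  "f_indep_grad d n f \<longleftrightarrow>
     (\<forall>j\<in>{1..n}. \<forall>\<phi> \<psi>. \<phi> (zero_mi d) = \<psi> (zero_mi d) \<longrightarrow> f j \<phi> = f j \<psi>)"

text \<open>Node k j cs = X^k Xi_j prod_i I^{k_i}[tau_i] with cs = [(k_1,tau_1),...].
  The product is unordered; the order in the list is irrelevant.\<close>
datatype tree = Node mi nat "(mi \<times> tree) list"

fun hom :: "real \<Rightarrow> tree \<Rightarrow> real" where
  "hom \<beta> (Node k j cs) = real (sdeg k) + (if j \<ge> 1 then \<beta> else 0)
     + sum_list (map (\<lambda>c. hom \<beta> (snd c) + 2 - real (sdeg (fst c))) cs)"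

definition Ups_base :: "('e jet \<Rightarrow> 'e) \<Rightarrow> (nat \<Rightarrow> 'e jet \<Rightarrow> 'e) \<Rightarrow> nat \<Rightarrow> 'e jet \<Rightarrow> 'e" where
  "Ups_base P f j = (if j = 0 then P else f j)"

fun Ups :: "nat \<Rightarrow> ('e::euclidean_space jet \<Rightarrow> 'e) \<Rightarrow> (nat \<Rightarrow> 'e jet \<Rightarrow> 'e) \<Rightarrow> tree \<Rightarrow> 'e jet \<Rightarrow> 'e" where
  "Ups d P f (Node k j cs) = (\<lambda>\<phi>.
     pdk d k (Dks (map fst cs) (lift (Ups_base P f j))) \<phi>
       (map (\<lambda>c. Ups d P f (snd c) \<phi>) cs))"

text \<open>Rules R_j (as predicates on lists of edge labels; order irrelevant)\<close>
definition rule :: "nat \<Rightarrow> nat \<Rightarrow> ('e::euclidean_space jet \<Rightarrow> 'e) \<Rightarrow> (nat \<Rightarrow> 'e jet \<Rightarrow> 'e) \<Rightarrow> nat \<Rightarrow> mi list \<Rightarrow> bool" where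
  "rule d n P f j ks \<longleftrightarrow>
     (if j = 0 then Dnonzero ks (lift P)
      else if f_const n f then ks = []
      else if f_indep_grad d n f then (\<forall>k\<in>set ks. k = zero_mi d)
      else (\<forall>k\<in>set ks. sdeg k \<le> 1))"

fun conforming :: "nat \<Rightarrow> nat \<Rightarrow> ('e::euclidean_space jet \<Rightarrow> 'e) \<Rightarrow> (nat \<Rightarrow> 'e jet \<Rightarrow> 'e) \<Rightarrow> tree \<Rightarrow> bool" where
  "conforming d n P f (Node k j cs) \<longleftrightarrow>
     k \<in> mindex d \<and> j \<le> n \<and> set (map fst cs) \<subseteq> mindex d \<and>
     (cs = [] \<or> rule d n P f j (map fst cs)) \<and>
     (\<forall>c\<in>set cs. conforming d n P f (snd c))"

end

theory Submission
  imports Defs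
begin

lemma Dks_append: "Dks (ks @ ks') G = Dks ks (Dks ks' G)"
  by (induction ks) auto

declare Dks.simps(2)[simp del]

lemma Dks_Cons: "Dks (k # ks) G \<phi> hs =
   vector_derivative (\<lambda>t::real. Dks ks G (\<phi>(k := \<phi> k + t *\<^sub>R hd hs)) (tl hs)) (at 0)"
  by (simp add: Dks.simps(2))

lemma Dks_Cons_eq: "Dks (k # ks) G \<phi> (h # hs) =
   vector_derivative (\<lambda>t::real. Dks ks G (\<phi>(k := \<phi> k + t *\<^sub>R h)) hs) (at 0)"
  by (simp add: Dks_Cons)

definition dep :: "mi set \<Rightarrow> ('e jet \<Rightarrow> 'e list \<Rightarrow> 'e) \<Rightarrow> bool" where
  "dep S G \<longleftrightarrow> (\<forall>\<phi> \<psi>. (\<forall>l\<in>S. \<phi> l = \<psi> l) \<longrightarrow> G \<phi> = G \<psi>)"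

lemma upd_agree:
  assumes "\<forall>l\<in>S. \<phi> l = \<psi> l"
  shows "\<forall>l\<in>S. (\<phi>(k := \<phi> k + x)) l = (\<psi>(k := \<psi> k + x)) l"
  using assms by auto

lemma dep_Dks: "dep S G \<Longrightarrow> dep S (Dks ks (G::'e::real_normed_vector jet \<Rightarrow> 'e list \<Rightarrow> 'e))"
proof (induction ks)
  case Nil then show ?case by simp
next
  case (Cons k ks)
  show ?case unfolding dep_def
  proof (intro allI impI)
    fix \<phi> \<psi> :: "'e jet" assume a: "\<forall>l\<in>S. \<phi> l = \<psi> l"
    have "\<And>t hs. Dks ks G (\<phi>(k := \<phi> k + t *\<^sub>R hd hs)) = Dks ks G (\<psi>(k := \<psi> k + t *\<^sub>R hd hs))"
      using Cons upd_agree[OF a] unfolding dep_def by blast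
    then show "Dks (k # ks) G \<phi> = Dks (k # ks) G \<psi>" by (intro ext) (simp add: Dks_Cons)
  qed
qed

lemma Dks_zero_notin:
  assumes "dep S G" "k \<notin> S"
  shows "Dks (k # ks) (G::'e::real_normed_vector jet \<Rightarrow> 'e list \<Rightarrow> 'e) \<phi> hs = 0"
proof -
  have "\<And>t. Dks ks G (\<phi>(k := \<phi> k + t *\<^sub>R hd hs)) = Dks ks G \<phi>"
    using dep_Dks[OF assms(1), of ks] assms(2) unfolding dep_def by auto
  then show ?thesis by (simp add: Dks_Cons)
qed

lemma Dks_zero_fun:
  assumes "\<And>\<phi> hs. G \<phi> hs = 0"
  shows "Dks ks (G::'e::real_normed_vector jet \<Rightarrow> 'e list \<Rightarrow> 'e) \<phi> hs = 0"
  using assms by (induction ks arbitrary: \<phi> hs) (auto simp: Dks_Cons)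

definition DnzA :: "nat \<Rightarrow> mi list \<Rightarrow> ('e::real_normed_vector jet \<Rightarrow> 'e list \<Rightarrow> 'e) \<Rightarrow> bool" where
  "DnzA m ks G \<longleftrightarrow> (\<exists>\<phi> hs. length hs = length ks + m \<and> Dks ks G \<phi> hs \<noteq> 0)"

lemma Dnonzero_DnzA: "Dnonzero ks G = DnzA 0 ks G"
  unfolding Dnonzero_def DnzA_def by simp

lemma dep_DnzA:
  assumes "dep S G" "DnzA m ks G"
  shows "set ks \<subseteq> S"
proof
  fix k assume "k \<in> set ks"
  then obtain ks1 ks2 where ks: "ks = ks1 @ k # ks2" by (meson split_list)
  show "k \<in> S"
  proof (rule ccontr)
    assume "k \<notin> S"
    then have "\<And>\<phi> hs. Dks (k # ks2) G \<phi> hs = 0" using Dks_zero_notin assms(1) by blast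
    then have "\<And>\<phi> hs. Dks ks G \<phi> hs = 0" unfolding ks Dks_append
      by (rule Dks_zero_fun)
    then show False using assms(2) unfolding DnzA_def by blast
  qed
qed

section \<open>Smooth class\<close>

definition SmD :: "nat \<Rightarrow> nat \<Rightarrow> ('e::real_normed_vector jet \<Rightarrow> 'e list \<Rightarrow> 'e) \<Rightarrow> bool" where
  "SmD d m G \<longleftrightarrow> (\<forall>ks hs \<phi> k h. set ks \<subseteq> mindex d \<longrightarrow> k \<in> mindex d \<longrightarrow> length hs = length ks + m \<longrightarrow>
      ((\<lambda>t. Dks ks G (\<phi>(k := \<phi> k + t *\<^sub>R h)) hs) has_vector_derivative Dks (k#ks) G \<phi> (h#hs)) (at 0))"

definition SmL :: "nat \<Rightarrow> nat \<Rightarrow> ('e::real_normed_vector jet \<Rightarrow> 'e list \<Rightarrow> 'e) \<Rightarrow> bool" where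
  "SmL d m G \<longleftrightarrow> (\<forall>ks hs \<phi> i. set ks \<subseteq> mindex d \<longrightarrow> length hs = length ks + m \<longrightarrow> i < length hs \<longrightarrow>
      linear (\<lambda>x. Dks ks G \<phi> (hs[i := x])))"

definition Sm :: "nat \<Rightarrow> nat \<Rightarrow> ('e::real_normed_vector jet \<Rightarrow> 'e list \<Rightarrow> 'e) \<Rightarrow> bool" where
  "Sm d m G \<longleftrightarrow> (\<exists>S. finite S \<and> dep S G) \<and> SmD d m G \<and> SmL d m G"

lemma Sm_SmD: "Sm d m G \<Longrightarrow> SmD d m G" unfolding Sm_def by simp
lemma Sm_SmL: "Sm d m G \<Longrightarrow> SmL d m G" unfolding Sm_def by simp

lemma linear_vd:
  fixes A :: "real \<Rightarrow> 'a::real_normed_vector \<Rightarrow> 'b::real_normed_vector"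
  assumes d: "\<And>x. ((\<lambda>t. A t x) has_vector_derivative A' x) (at 0)"
    and l: "\<And>t. linear (A t)"
  shows "linear A'"
proof (rule linearI)
  fix x y
  have "((\<lambda>t. A t x + A t y) has_vector_derivative A' x + A' y) (at 0)"
    using d by (intro has_vector_derivative_add)
  moreover have "(\<lambda>t. A t x + A t y) = (\<lambda>t. A t (x + y))"
    using l by (simp add: linear_add)
  ultimately show "A' (x + y) = A' x + A' y"
    using d[of "x + y"] vector_derivative_unique_at by metis
next
  fix c :: real and x
  have "((\<lambda>t. c *\<^sub>R A t x) has_vector_derivative c *\<^sub>R A' x) (at 0)"
    using d by (intro bounded_linear.has_vector_derivative[OF bounded_linear_scaleR_right])
  moreover have "(\<lambda>t. c *\<^sub>R A t x) = (\<lambda>t. A t (c *\<^sub>R x))"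
    using l by (simp add: linear_scale)
  ultimately show "A' (c *\<^sub>R x) = c *\<^sub>R A' x"
    using d[of "c *\<^sub>R x"] vector_derivative_unique_at by metis
qed

lemma lin_later:
  assumes D: "\<And>\<psi> x. ((\<lambda>t. Dks ks G (\<psi>(k := \<psi> k + t *\<^sub>R h)) (hs[i := x])) has_vector_derivative
                 Dks (k#ks) G \<psi> (h # hs[i := x])) (at 0)"
    and L: "\<And>\<psi>. linear (\<lambda>x. Dks ks G \<psi> (hs[i := x]))"
  shows "linear (\<lambda>x. Dks (k # ks) G \<phi> ((h # hs)[Suc i := x]))"
  using linear_vd[where A = "\<lambda>t x. Dks ks G (\<phi>(k := \<phi> k + t *\<^sub>R h)) (hs[i := x])", OF D L]
  by (simp add: Dks_Cons)


definition constG :: "('e list \<Rightarrow> 'e) \<Rightarrow> 'e jet \<Rightarrow> 'e list \<Rightarrow> 'e" where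
  "constG F = (\<lambda>\<phi> hs. F hs)"

lemma Dks_constG: "Dks ks (constG F :: 'e::real_normed_vector jet \<Rightarrow> _) \<phi> hs = (if ks = [] then F hs else 0)"
proof (induction ks arbitrary: \<phi> hs)
  case Nil then show ?case by (simp add: constG_def)
next
  case (Cons k ks)
  then show ?case by (simp add: Dks_Cons)
qed

lemma Sm_constG:
  assumes "multilin m F"
  shows "Sm d m (constG F :: 'e::euclidean_space jet \<Rightarrow> _)"
  unfolding Sm_def SmD_def SmL_def
proof (intro conjI allI impI)
  show "\<exists>S. finite S \<and> dep S (constG F :: 'e jet \<Rightarrow> _)"
    by (rule exI[of _ "{}"]) (simp add: dep_def constG_def)
next
  fix ks hs \<phi> k h
  show "((\<lambda>t. Dks ks (constG F :: 'e jet \<Rightarrow> _) (\<phi>(k := \<phi> k + t *\<^sub>R h)) hs) has_vector_derivative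
      Dks (k # ks) (constG F) \<phi> (h # hs)) (at 0)"
    by (simp only: Dks_constG) simp
next
  fix ks :: "mi list" and hs :: "'e list" and \<phi> i
  assume "length hs = length ks + m" "i < length hs"
  then show "linear (\<lambda>x. Dks ks (constG F :: 'e jet \<Rightarrow> _) \<phi> (hs[i := x]))"
  proof (cases "ks = []")
    case True
    then show ?thesis using assms \<open>length hs = length ks + m\<close> \<open>i < length hs\<close>
      unfolding multilin_def by (simp add: Dks_constG constG_def)
  qed (simp add: Dks_constG linear_zero)
qed

lemma DnzA_constG: "DnzA m ks (constG F :: 'e::real_normed_vector jet \<Rightarrow> _) \<Longrightarrow> ks = []"
  unfolding DnzA_def by (auto simp: Dks_constG split: if_splits)

definition projG :: "mi \<Rightarrow> 'e jet \<Rightarrow> 'e" where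
  "projG l = (\<lambda>\<phi>. \<phi> l)"

lemma Dks_proj_Cons: "Dks (k # ks) (lift (projG l) :: 'e::real_normed_vector jet \<Rightarrow> _) \<phi> hs =
   (if ks = [] \<and> k = l then hd hs else 0)"
proof (induction ks arbitrary: k \<phi> hs)
  case Nil
  show ?case
  proof (cases "k = l")
    case True
    have "((\<lambda>t::real. \<phi> l + t *\<^sub>R hd hs) has_vector_derivative hd hs) (at 0)"
      by (auto intro!: derivative_eq_intros)
    then show ?thesis using True by (simp add: Dks_Cons lift_def projG_def vector_derivative_at)
  next
    case False
    then show ?thesis by (simp add: Dks_Cons lift_def projG_def)
  qed
next
  case (Cons k' ks)
  show ?case by (simp add: Dks_Cons[of k] Cons.IH)
qed

lemma Sm_proj: "Sm d 0 (lift (projG l) :: 'e::euclidean_space jet \<Rightarrow> _)"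
  unfolding Sm_def SmD_def SmL_def
proof (intro conjI allI impI)
  show "\<exists>S. finite S \<and> dep S (lift (projG l) :: 'e jet \<Rightarrow> _)"
    by (rule exI[of _ "{l}"]) (simp add: dep_def lift_def projG_def)
next
  fix ks :: "mi list" and hs :: "'e list" and \<phi> k h
  assume len: "length hs = length ks + 0"
  show "((\<lambda>t. Dks ks (lift (projG l) :: 'e jet \<Rightarrow> _) (\<phi>(k := \<phi> k + t *\<^sub>R h)) hs) has_vector_derivative
      Dks (k # ks) (lift (projG l)) \<phi> (h # hs)) (at 0)"
  proof (cases ks)
    case Nil
    show ?thesis
    proof (cases "k = l")
      case True
      then show ?thesis using Nil
        by (simp only: Dks_proj_Cons Dks.simps(1)) (auto simp: lift_def projG_def intro!: derivative_eq_intros)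
    next
      case False
      then show ?thesis using Nil
        by (simp only: Dks_proj_Cons Dks.simps(1)) (auto simp: lift_def projG_def intro!: derivative_eq_intros)
    qed
  next
    case (Cons k' ks')
    then show ?thesis by (simp add: Dks_proj_Cons)
  qed
next
  fix ks :: "mi list" and hs :: "'e list" and \<phi> i
  assume "length hs = length ks + 0" "i < length hs"
  then show "linear (\<lambda>x. Dks ks (lift (projG l) :: 'e jet \<Rightarrow> _) \<phi> (hs[i := x]))"
  proof (cases ks)
    case Nil
    then show ?thesis using \<open>i < length hs\<close> \<open>length hs = length ks + 0\<close> by simp
  next
    case (Cons k' ks')
    show ?thesis
    proof (cases "ks' = [] \<and> k' = l")
      case True
      then obtain y where "hs = [y]" "i = 0" using Cons \<open>i < length hs\<close> \<open>length hs = length ks + 0\<close>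
        by (auto simp: length_Suc_conv)
      then show ?thesis using True Cons by (simp add: Dks_proj_Cons linear_ident)
    next
      case False
      then have "(\<lambda>x. Dks ks (lift (projG l) :: 'e jet \<Rightarrow> _) \<phi> (hs[i := x])) = (\<lambda>x. 0)"
        using Cons by (auto simp: Dks_proj_Cons)
      then show ?thesis by (simp add: linear_zero)
    qed
  qed
qed

lemma Dnonzero_proj:
  assumes "DnzA 0 ks (lift (projG l) :: 'e::real_normed_vector jet \<Rightarrow> _)"
  shows "ks = [] \<or> ks = [l]"
  using assms unfolding DnzA_def
  by (cases ks) (auto simp: Dks_proj_Cons split: if_splits)

definition sumG :: "'i set \<Rightarrow> ('i \<Rightarrow> 'e jet \<Rightarrow> 'e list \<Rightarrow> 'e) \<Rightarrow> 'e jet \<Rightarrow> 'e list \<Rightarrow> 'e::real_normed_vector" where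
  "sumG I Gs = (\<lambda>\<phi> hs. \<Sum>i\<in>I. Gs i \<phi> hs)"

lemma Dks_sumG:
  fixes Gs :: "'i \<Rightarrow> 'e::real_normed_vector jet \<Rightarrow> 'e list \<Rightarrow> 'e"
  assumes "\<And>i. i \<in> I \<Longrightarrow> SmD d m (Gs i)" "set ks \<subseteq> mindex d" "length hs = length ks + m"
  shows "Dks ks (sumG I Gs) \<phi> hs = (\<Sum>i\<in>I. Dks ks (Gs i) \<phi> hs)"
  using assms(2,3)
proof (induction ks arbitrary: \<phi> hs)
  case Nil then show ?case by (simp add: sumG_def)
next
  case (Cons k ks)
  then obtain h hs' where hs: "hs = h # hs'" by (cases hs) auto
  have k: "k \<in> mindex d" and ks: "set ks \<subseteq> mindex d" using Cons.prems by auto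
  have len: "length hs' = length ks + m" using Cons.prems hs by simp
  have der: "((\<lambda>t. \<Sum>i\<in>I. Dks ks (Gs i) (\<phi>(k := \<phi> k + t *\<^sub>R h)) hs') has_vector_derivative
        (\<Sum>i\<in>I. Dks (k # ks) (Gs i) \<phi> (h # hs'))) (at 0)"
    using assms(1) k ks len unfolding SmD_def by (intro has_vector_derivative_sum) blast
  have eq: "(\<lambda>t. Dks ks (sumG I Gs) (\<phi>(k := \<phi> k + t *\<^sub>R h)) hs') =
      (\<lambda>t. \<Sum>i\<in>I. Dks ks (Gs i) (\<phi>(k := \<phi> k + t *\<^sub>R h)) hs')"
    by (rule ext) (rule Cons.IH[OF ks len])
  have "Dks (k # ks) (sumG I Gs) \<phi> hs = vector_derivative (\<lambda>t. Dks ks (sumG I Gs) (\<phi>(k := \<phi> k + t *\<^sub>R h)) hs') (at 0)"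
    by (simp add: Dks_Cons hs)
  also have "\<dots> = (\<Sum>i\<in>I. Dks (k # ks) (Gs i) \<phi> (h # hs'))"
    unfolding eq using der by (rule vector_derivative_at)
  finally show ?case using hs by simp
qed

lemma Sm_sumG:
  fixes Gs :: "'i \<Rightarrow> 'e::real_normed_vector jet \<Rightarrow> 'e list \<Rightarrow> 'e"
  assumes "finite I" "\<And>i. i \<in> I \<Longrightarrow> Sm d m (Gs i)"
  shows "Sm d m (sumG I Gs)"
  unfolding Sm_def
proof (intro conjI)
  have "\<forall>i\<in>I. \<exists>S. finite S \<and> dep S (Gs i)" using assms(2) unfolding Sm_def by blast
  then obtain S where S: "\<And>i. i \<in> I \<Longrightarrow> finite (S i) \<and> dep (S i) (Gs i)" by metis
  show "\<exists>S. finite S \<and> dep S (sumG I Gs)"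
  proof (intro exI conjI)
    show "finite (\<Union>i\<in>I. S i)" using S assms(1) by (intro finite_UN_I) auto
    show "dep (\<Union>i\<in>I. S i) (sumG I Gs)"
      unfolding dep_def sumG_def
    proof (intro allI impI)
      fix \<phi> \<psi> :: "'e jet" assume a: "\<forall>l\<in>\<Union>i\<in>I. S i. \<phi> l = \<psi> l"
      have "\<And>i. i \<in> I \<Longrightarrow> Gs i \<phi> = Gs i \<psi>" using S a unfolding dep_def by blast
      then show "(\<lambda>hs. \<Sum>i\<in>I. Gs i \<phi> hs) = (\<lambda>hs. \<Sum>i\<in>I. Gs i \<psi> hs)" by simp
    qed
  qed
  have D: "\<And>i. i \<in> I \<Longrightarrow> SmD d m (Gs i)" and L: "\<And>i. i \<in> I \<Longrightarrow> SmL d m (Gs i)"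
    using assms(2) unfolding Sm_def by auto
  show "SmD d m (sumG I Gs)"
    unfolding SmD_def
  proof (intro allI impI)
    fix ks :: "mi list" and hs :: "'e list" and \<phi> k h
    assume a: "set ks \<subseteq> mindex d" "k \<in> mindex d" "length hs = length ks + m"
    have hd: "((\<lambda>t. \<Sum>i\<in>I. Dks ks (Gs i) (\<phi>(k := \<phi> k + t *\<^sub>R h)) hs) has_vector_derivative
        (\<Sum>i\<in>I. Dks (k # ks) (Gs i) \<phi> (h # hs))) (at 0)"
      using D a unfolding SmD_def by (intro has_vector_derivative_sum) blast
    have e1: "\<And>t. Dks ks (sumG I Gs) (\<phi>(k := \<phi> k + t *\<^sub>R h)) hs = (\<Sum>i\<in>I. Dks ks (Gs i) (\<phi>(k := \<phi> k + t *\<^sub>R h)) hs)"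
      using a by (intro Dks_sumG[OF D]) auto
    have e2: "Dks (k # ks) (sumG I Gs) \<phi> (h # hs) = (\<Sum>i\<in>I. Dks (k # ks) (Gs i) \<phi> (h # hs))"
      using a by (intro Dks_sumG[OF D]) auto
    show "((\<lambda>t. Dks ks (sumG I Gs) (\<phi>(k := \<phi> k + t *\<^sub>R h)) hs) has_vector_derivative
        Dks (k # ks) (sumG I Gs) \<phi> (h # hs)) (at 0)"
      unfolding e1 e2 by (rule hd)
  qed
  show "SmL d m (sumG I Gs)"
    unfolding SmL_def
  proof (intro allI impI)
    fix ks :: "mi list" and hs :: "'e list" and \<phi> i
    assume a: "set ks \<subseteq> mindex d" "length hs = length ks + m" "i < length hs"
    have "linear (\<lambda>x. \<Sum>j\<in>I. Dks ks (Gs j) \<phi> (hs[i := x]))"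
      using L a unfolding SmL_def by (intro linear_compose_sum) auto
    then show "linear (\<lambda>x. Dks ks (sumG I Gs) \<phi> (hs[i := x]))"
      using a by (simp add: Dks_sumG[OF D])
  qed
qed

lemma DnzA_sumG:
  fixes Gs :: "'i \<Rightarrow> 'e::real_normed_vector jet \<Rightarrow> 'e list \<Rightarrow> 'e"
  assumes "\<And>i. i \<in> I \<Longrightarrow> SmD d m (Gs i)" "set ks \<subseteq> mindex d" "DnzA m ks (sumG I Gs)"
  shows "\<exists>i\<in>I. DnzA m ks (Gs i)"
proof -
  obtain \<phi> hs where l: "length hs = length ks + m" and nz: "Dks ks (sumG I Gs) \<phi> hs \<noteq> 0"
    using assms(3) unfolding DnzA_def by blast
  have "Dks ks (sumG I Gs) \<phi> hs = (\<Sum>i\<in>I. Dks ks (Gs i) \<phi> hs)"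
    by (rule Dks_sumG[OF _ assms(2) l]) (rule assms(1))
  then have "(\<Sum>i\<in>I. Dks ks (Gs i) \<phi> hs) \<noteq> 0" using nz by simp
  then obtain i where "i \<in> I" "Dks ks (Gs i) \<phi> hs \<noteq> 0"
    using sum.not_neutral_contains_not_neutral by blast
  then show ?thesis using l unfolding DnzA_def by blast
qed

lemma Sm_Dks:
  fixes G :: "'e::real_normed_vector jet \<Rightarrow> 'e list \<Rightarrow> 'e"
  assumes "Sm d m G" "set kk \<subseteq> mindex d"
  shows "Sm d (m + length kk) (Dks kk G)"
  unfolding Sm_def SmD_def SmL_def
proof (intro conjI allI impI)
  show "\<exists>S. finite S \<and> dep S (Dks kk G)" using assms(1) dep_Dks unfolding Sm_def by blast
next
  fix ks :: "mi list" and hs :: "'e list" and \<phi> k h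
  assume a: "set ks \<subseteq> mindex d" "k \<in> mindex d" "length hs = length ks + (m + length kk)"
  then have "set (ks @ kk) \<subseteq> mindex d" "length hs = length (ks @ kk) + m" using assms(2) by auto
  then have "((\<lambda>t. Dks (ks @ kk) G (\<phi>(k := \<phi> k + t *\<^sub>R h)) hs) has_vector_derivative Dks (k # ks @ kk) G \<phi> (h # hs)) (at 0)"
    using assms(1) a(2) unfolding Sm_def SmD_def by blast
  then show "((\<lambda>t. Dks ks (Dks kk G) (\<phi>(k := \<phi> k + t *\<^sub>R h)) hs) has_vector_derivative
          Dks (k # ks) (Dks kk G) \<phi> (h # hs)) (at 0)"
    by (simp add: Dks_append[symmetric])
next
  fix ks :: "mi list" and hs :: "'e list" and \<phi> i
  assume a: "set ks \<subseteq> mindex d" "length hs = length ks + (m + length kk)" "i < length hs"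
  then have "set (ks @ kk) \<subseteq> mindex d" "length hs = length (ks @ kk) + m" using assms(2) by auto
  then have "linear (\<lambda>x. Dks (ks @ kk) G \<phi> (hs[i := x]))"
    using assms(1) a(3) unfolding Sm_def SmL_def by blast
  then show "linear (\<lambda>x. Dks ks (Dks kk G) \<phi> (hs[i := x]))"
    by (simp add: Dks_append[symmetric])
qed

lemma DnzA_Dks: "DnzA (length kk) ks (Dks kk G) \<Longrightarrow> DnzA 0 (ks @ kk) G"
  unfolding DnzA_def by (auto simp: Dks_append)

lemma Dks_cong:
  assumes "\<And>\<phi>. G \<phi> xs = G' \<phi> xs" "length vs = length ks"
  shows "Dks ks (G::'e::real_normed_vector jet \<Rightarrow> _) \<phi> (vs @ xs) = Dks ks G' \<phi> (vs @ xs)"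
  using assms(2)
proof (induction ks arbitrary: \<phi> vs)
  case Nil then show ?case using assms(1) by simp
next
  case (Cons k ks)
  then obtain v vs' where vs: "vs = v # vs'" and l: "length vs' = length ks" by (cases vs) auto
  have "(\<lambda>t. Dks ks G (\<phi>(k := \<phi> k + t *\<^sub>R v)) (vs' @ xs)) = (\<lambda>t. Dks ks G' (\<phi>(k := \<phi> k + t *\<^sub>R v)) (vs' @ xs))"
    by (rule ext) (rule Cons.IH[OF l])
  then show ?case using vs by (simp add: Dks_Cons)
qed

lemma Dks_cong':
  fixes G G' :: "'e::real_normed_vector jet \<Rightarrow> 'e list \<Rightarrow> 'e"
  assumes "\<And>\<phi> xs. length xs = m \<Longrightarrow> G \<phi> xs = G' \<phi> xs" "length hs = length ks + m"
  shows "Dks ks G \<phi> hs = Dks ks G' \<phi> hs"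
proof -
  have l: "length (drop (length ks) hs) = m" using assms(2) by simp
  have "Dks ks G \<phi> (take (length ks) hs @ drop (length ks) hs) = Dks ks G' \<phi> (take (length ks) hs @ drop (length ks) hs)"
    using assms(1)[OF l] assms(2) by (intro Dks_cong) simp_all
  then show ?thesis by simp
qed

lemma Sm_cong:
  fixes G G' :: "'e::real_normed_vector jet \<Rightarrow> 'e list \<Rightarrow> 'e"
  assumes "Sm d m G" "\<And>\<phi> xs. length xs = m \<Longrightarrow> G \<phi> xs = G' \<phi> xs" "finite S" "dep S G'"
  shows "Sm d m G'"
  unfolding Sm_def SmD_def SmL_def
proof (intro conjI allI impI)
  show "\<exists>S. finite S \<and> dep S G'" using assms(3,4) by blast
next
  fix ks :: "mi list" and hs :: "'e list" and \<phi> k h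
  assume a: "set ks \<subseteq> mindex d" "k \<in> mindex d" "length hs = length ks + m"
  have e1: "\<And>\<psi>. Dks ks G' \<psi> hs = Dks ks G \<psi> hs" by (rule Dks_cong'[OF assms(2) a(3), symmetric])
  have e2: "Dks (k # ks) G' \<phi> (h # hs) = Dks (k # ks) G \<phi> (h # hs)"
  proof -
    have l2: "length (h # hs) = length (k # ks) + m" using a(3) by simp
    show ?thesis by (rule Dks_cong'[OF assms(2) l2, symmetric])
  qed
  show "((\<lambda>t. Dks ks G' (\<phi>(k := \<phi> k + t *\<^sub>R h)) hs) has_vector_derivative Dks (k # ks) G' \<phi> (h # hs)) (at 0)"
    unfolding e1 e2 using assms(1) a unfolding Sm_def SmD_def by simp
next
  fix ks :: "mi list" and hs :: "'e list" and \<phi> i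
  assume a: "set ks \<subseteq> mindex d" "length hs = length ks + m" "i < length hs"
  have e1: "\<And>x. Dks ks G' \<phi> (hs[i := x]) = Dks ks G \<phi> (hs[i := x])"
  proof -
    have l2: "length (hs[i := x]) = length ks + m" for x using a(2) by simp
    show "\<And>x. ?thesis x" by (rule Dks_cong'[OF assms(2) l2, symmetric])
  qed
  show "linear (\<lambda>x. Dks ks G' \<phi> (hs[i := x]))"
    unfolding e1 using assms(1) a unfolding Sm_def SmL_def by simp
qed

lemma DnzA_cong:
  fixes G G' :: "'e::real_normed_vector jet \<Rightarrow> 'e list \<Rightarrow> 'e"
  assumes "DnzA m ks G" "\<And>\<phi> xs. length xs = m \<Longrightarrow> G \<phi> xs = G' \<phi> xs"
  shows "DnzA m ks G'"
proof -
  obtain \<phi> hs where l: "length hs = length ks + m" and nz: "Dks ks G \<phi> hs \<noteq> 0" using assms(1) unfolding DnzA_def by blast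
  have "Dks ks G \<phi> hs = Dks ks G' \<phi> hs" by (rule Dks_cong'[OF assms(2) l])
  then show ?thesis using l nz unfolding DnzA_def by auto
qed


subsection \<open>Product rule\<close>

lemma prod_rule:
  fixes L :: "real \<Rightarrow> 'e::euclidean_space \<Rightarrow> 'f::real_normed_vector"
  assumes dL: "\<And>x. ((\<lambda>t. L t x) has_vector_derivative L' x) (at 0)"
    and lL: "\<And>t. linear (L t)" and lL': "linear L'"
    and dX: "(X has_vector_derivative X') (at 0)"
  shows "((\<lambda>t. L t (X t)) has_vector_derivative (L' (X 0) + L 0 X')) (at 0)"
proof -
  have rep: "L t y = (\<Sum>b\<in>Basis. (y \<bullet> b) *\<^sub>R L t b)" for t y
  proof -
    have "L t y = L t (\<Sum>b\<in>Basis. (y \<bullet> b) *\<^sub>R b)" by (simp add: euclidean_representation)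
    also have "\<dots> = (\<Sum>b\<in>Basis. (y \<bullet> b) *\<^sub>R L t b)" using lL[of t] by (simp add: linear_sum linear_scale)
    finally show ?thesis .
  qed
  have rep': "L' y = (\<Sum>b\<in>Basis. (y \<bullet> b) *\<^sub>R L' b)" for y
  proof -
    have "L' y = L' (\<Sum>b\<in>Basis. (y \<bullet> b) *\<^sub>R b)" by (simp add: euclidean_representation)
    also have "\<dots> = (\<Sum>b\<in>Basis. (y \<bullet> b) *\<^sub>R L' b)" using lL' by (simp add: linear_sum linear_scale)
    finally show ?thesis .
  qed
  have dXb: "((\<lambda>t. X t \<bullet> b) has_real_derivative X' \<bullet> b) (at 0)" for b
    using bounded_linear.has_vector_derivative[OF bounded_linear_inner_left dX, of b]
    by (simp add: has_real_derivative_iff_has_vector_derivative)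
  have "((\<lambda>t. \<Sum>b\<in>Basis. (X t \<bullet> b) *\<^sub>R L t b) has_vector_derivative
      (\<Sum>b\<in>Basis. (X 0 \<bullet> b) *\<^sub>R L' b + (X' \<bullet> b) *\<^sub>R L 0 b)) (at 0)"
    by (intro has_vector_derivative_sum has_vector_derivative_scaleR dXb dL)
  moreover have "(\<Sum>b\<in>Basis. (X 0 \<bullet> b) *\<^sub>R L' b + (X' \<bullet> b) *\<^sub>R L 0 b) = L' (X 0) + L 0 X'"
    by (simp add: sum.distrib rep[of 0 X'] rep'[of "X 0"])
  ultimately show ?thesis using rep[of _ "X _"] by simp
qed

definition fill0 :: "('e jet \<Rightarrow> 'e list \<Rightarrow> 'e) \<Rightarrow> ('e jet \<Rightarrow> 'e) \<Rightarrow> 'e jet \<Rightarrow> 'e list \<Rightarrow> 'e" where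
  "fill0 N H = (\<lambda>\<phi> hs. N \<phi> (H \<phi> # hs))"

definition LT :: "('e::real_normed_vector jet \<Rightarrow> 'e list \<Rightarrow> 'e) \<Rightarrow> ('e jet \<Rightarrow> 'e) \<Rightarrow> mi list \<Rightarrow> 'e list \<Rightarrow> 'e list \<Rightarrow> 'e jet \<Rightarrow> nat set \<Rightarrow> 'e" where
  "LT N H ks vs rest \<phi> A = Dks (nths ks (-A)) N \<phi> (nths vs (-A) @ Dks (nths ks A) (lift H) \<phi> (nths vs A) # rest)"

lemma nths_Suc_img: "nths (x # xs) (Suc ` A) = nths xs A"
  by (simp add: nths_Cons image_iff)

lemma nths_Suc_img_c: "nths (x # xs) (- (Suc ` A)) = x # nths xs (- A)"
proof -
  have "{j. Suc j \<in> - Suc ` A} = - A" by (auto simp: image_iff)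
  moreover have "0 \<in> - Suc ` A" by auto
  ultimately show ?thesis by (simp add: nths_Cons)
qed

lemma nths_ins_img: "nths (x # xs) (insert 0 (Suc ` A)) = x # nths xs A"
  by (simp add: nths_Cons image_iff)

lemma nths_ins_img_c: "nths (x # xs) (- insert 0 (Suc ` A)) = nths xs (- A)"
proof -
  have "{j. Suc j \<in> - insert 0 (Suc ` A)} = - A" by (auto simp: image_iff)
  then show ?thesis by (simp add: nths_Cons)
qed

lemma LT_Suc: "LT N H (k # ks) (h # vs) rest \<phi> (Suc ` A) =
   Dks (k # nths ks (-A)) N \<phi> (h # nths vs (-A) @ Dks (nths ks A) (lift H) \<phi> (nths vs A) # rest)"
  unfolding LT_def nths_Suc_img nths_Suc_img_c by simp

lemma LT_ins: "LT N H (k # ks) (h # vs) rest \<phi> (insert 0 (Suc ` A)) =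
   Dks (nths ks (-A)) N \<phi> (nths vs (-A) @ Dks (k # nths ks A) (lift H) \<phi> (h # nths vs A) # rest)"
  unfolding LT_def nths_ins_img nths_ins_img_c by simp

lemma sum_Pow_Suc:
  "(\<Sum>A'\<in>Pow {..<Suc r}. g A') = (\<Sum>A\<in>Pow {..<r}. g (Suc ` A) + g (insert 0 (Suc ` A)))"
proof -
  let ?S = "Suc ` {..<r}"
  have z: "0 \<notin> ?S" by auto
  have "Pow {..<Suc r} = Pow ?S \<union> insert 0 ` Pow ?S"
    by (simp add: lessThan_Suc_eq_insert_0 Pow_insert)
  moreover have "Pow ?S \<inter> insert 0 ` Pow ?S = {}" using z by auto
  moreover have "inj_on (insert 0) (Pow ?S)" using z unfolding inj_on_def by (auto simp: insert_ident)
  ultimately have "(\<Sum>A'\<in>Pow {..<Suc r}. g A') = (\<Sum>A'\<in>Pow ?S. g A') + (\<Sum>A'\<in>Pow ?S. g (insert 0 A'))"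
    by (simp add: sum.union_disjoint sum.reindex)
  moreover have "Pow ?S = image Suc ` Pow {..<r}" by (rule image_Pow_surj[symmetric]) simp
  moreover have "inj_on (image Suc) (Pow {..<r})" by (simp add: inj_on_image)
  ultimately show ?thesis by (simp add: sum.reindex sum.distrib)
qed

lemma length_nths_eq: "length xs = length ys \<Longrightarrow> length (nths xs A) = length (nths ys A)"
  by (simp add: length_nths)

lemma leib_step:
  fixes N :: "'e::euclidean_space jet \<Rightarrow> 'e list \<Rightarrow> 'e" and H :: "'e jet \<Rightarrow> 'e"
  assumes N: "Sm d (Suc m) N" and H: "Sm d 0 (lift H)"
    and ks: "set ks \<subseteq> mindex d" and k: "k \<in> mindex d"
    and lv: "length vs = length ks" and lr: "length rest = m"
  shows "((\<lambda>t. \<Sum>A\<in>Pow {..<length ks}. LT N H ks vs rest (\<phi>(k := \<phi> k + t *\<^sub>R h)) A) has_vector_derivative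
     (\<Sum>A\<in>Pow {..<length ks}. LT N H (k # ks) (h # vs) rest \<phi> (Suc ` A) + LT N H (k # ks) (h # vs) rest \<phi> (insert 0 (Suc ` A)))) (at 0)"
proof (intro has_vector_derivative_sum)
  fix A
  let ?kc = "nths ks (-A)" and ?ka = "nths ks A" and ?vc = "nths vs (-A)" and ?va = "nths vs A"
  have skc: "set ?kc \<subseteq> mindex d" and ska: "set ?ka \<subseteq> mindex d" using ks set_nths_subset by fastforce+
  have lvc: "length ?vc = length ?kc" and lva: "length ?va = length ?ka" using lv by (auto intro: length_nths_eq)
  define L where "L = (\<lambda>t x. Dks ?kc N (\<phi>(k := \<phi> k + t *\<^sub>R h)) (?vc @ x # rest))"
  define L' where "L' = (\<lambda>x. Dks (k # ?kc) N \<phi> (h # ?vc @ x # rest))"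
  define X where "X = (\<lambda>t. Dks ?ka (lift H) (\<phi>(k := \<phi> k + t *\<^sub>R h)) ?va)"
  define X' where "X' = Dks (k # ?ka) (lift H) \<phi> (h # ?va)"
  have len1: "length (?vc @ x # rest) = length ?kc + Suc m" for x using lvc lr by simp
  have dL: "((\<lambda>t. L t x) has_vector_derivative L' x) (at 0)" for x
    using N skc k len1 unfolding Sm_def SmD_def L_def L'_def by blast
  have lL: "linear (L t)" for t
  proof -
    have SL: "SmL d (Suc m) N" using N unfolding Sm_def by blast
    have "linear (\<lambda>x. Dks ?kc N (\<phi>(k := \<phi> k + t *\<^sub>R h)) ((?vc @ 0 # rest)[length ?vc := x]))"
      using SL[unfolded SmL_def, rule_format, of ?kc "?vc @ 0 # rest" "length ?vc" "\<phi>(k := \<phi> k + t *\<^sub>R h)"]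
        skc len1[of 0] by simp
    then show ?thesis unfolding L_def by simp
  qed
  have lL': "linear L'"
  proof -
    have "set (k # ?kc) \<subseteq> mindex d" using skc k by simp
    moreover have "length (h # ?vc @ 0 # rest) = length (k # ?kc) + Suc m" using len1[of 0] by simp
    ultimately have "linear (\<lambda>x. Dks (k # ?kc) N \<phi> ((h # ?vc @ 0 # rest)[Suc (length ?vc) := x]))"
      using N unfolding Sm_def SmL_def by (metis Suc_less_eq add_Suc_right length_Cons length_append less_add_Suc1)
    then show ?thesis unfolding L'_def by simp
  qed
  have dX: "(X has_vector_derivative X') (at 0)"
    using H ska k lva unfolding Sm_def SmD_def X_def X'_def by simp
  have "((\<lambda>t. L t (X t)) has_vector_derivative (L' (X 0) + L 0 X')) (at 0)"
    by (rule prod_rule[OF dL lL lL' dX])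
  moreover have "(\<lambda>t. L t (X t)) = (\<lambda>t. LT N H ks vs rest (\<phi>(k := \<phi> k + t *\<^sub>R h)) A)"
    unfolding L_def X_def LT_def by simp
  moreover have "L' (X 0) = LT N H (k # ks) (h # vs) rest \<phi> (Suc ` A)"
    unfolding LT_Suc L'_def X_def by simp
  moreover have "L 0 X' = LT N H (k # ks) (h # vs) rest \<phi> (insert 0 (Suc ` A))"
    unfolding LT_ins L_def X'_def by simp
  ultimately show "((\<lambda>t. LT N H ks vs rest (\<phi>(k := \<phi> k + t *\<^sub>R h)) A) has_vector_derivative
      LT N H (k # ks) (h # vs) rest \<phi> (Suc ` A) + LT N H (k # ks) (h # vs) rest \<phi> (insert 0 (Suc ` A))) (at 0)"
    by simp
qed


lemma leibniz:
  fixes N :: "'e::euclidean_space jet \<Rightarrow> 'e list \<Rightarrow> 'e" and H :: "'e jet \<Rightarrow> 'e"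
  assumes N: "Sm d (Suc m) N" and H: "Sm d 0 (lift H)"
    and ks: "set ks \<subseteq> mindex d"
    and lv: "length vs = length ks" and lr: "length rest = m"
  shows "Dks ks (fill0 N H) \<phi> (vs @ rest) = (\<Sum>A\<in>Pow {..<length ks}. LT N H ks vs rest \<phi> A)"
  using ks lv
proof (induction ks arbitrary: vs \<phi>)
  case Nil
  then show ?case by (simp add: LT_def fill0_def lift_def)
next
  case (Cons k ks)
  then obtain h vs' where vs: "vs = h # vs'" and lv': "length vs' = length ks" by (cases vs) auto
  have k: "k \<in> mindex d" and ks': "set ks \<subseteq> mindex d" using Cons.prems by auto
  have eq: "(\<lambda>t. Dks ks (fill0 N H) (\<phi>(k := \<phi> k + t *\<^sub>R h)) (vs' @ rest)) =
     (\<lambda>t. \<Sum>A\<in>Pow {..<length ks}. LT N H ks vs' rest (\<phi>(k := \<phi> k + t *\<^sub>R h)) A)"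
    by (rule ext) (rule Cons.IH[OF ks' lv'])
  have "Dks (k # ks) (fill0 N H) \<phi> (vs @ rest) =
     vector_derivative (\<lambda>t. Dks ks (fill0 N H) (\<phi>(k := \<phi> k + t *\<^sub>R h)) (vs' @ rest)) (at 0)"
    by (simp add: Dks_Cons vs)
  also have "\<dots> = (\<Sum>A\<in>Pow {..<length ks}. LT N H (k # ks) (h # vs') rest \<phi> (Suc ` A) + LT N H (k # ks) (h # vs') rest \<phi> (insert 0 (Suc ` A)))"
    unfolding eq by (rule vector_derivative_at[OF leib_step[OF N H ks' k lv' lr]])
  also have "\<dots> = (\<Sum>A\<in>Pow {..<length (k # ks)}. LT N H (k # ks) vs rest \<phi> A)"
    unfolding vs by (simp add: sum_Pow_Suc)
  finally show ?case .
qed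

lemma Sm_fill0_D:
  fixes N :: "'e::euclidean_space jet \<Rightarrow> 'e list \<Rightarrow> 'e" and H :: "'e jet \<Rightarrow> 'e"
  assumes N: "Sm d (Suc m) N" and H: "Sm d 0 (lift H)"
  shows "SmD d m (fill0 N H)"
  unfolding SmD_def
proof (intro allI impI)
  fix ks :: "mi list" and hs :: "'e list" and \<phi> k h
  assume a: "set ks \<subseteq> mindex d" "k \<in> mindex d" "length hs = length ks + m"
  define vs where "vs = take (length ks) hs"
  define rest where "rest = drop (length ks) hs"
  have hs: "hs = vs @ rest" unfolding vs_def rest_def by simp
  have lv: "length vs = length ks" and lr: "length rest = m" using a(3) unfolding vs_def rest_def by auto
  have eq: "(\<lambda>t. Dks ks (fill0 N H) (\<phi>(k := \<phi> k + t *\<^sub>R h)) hs) =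
     (\<lambda>t. \<Sum>A\<in>Pow {..<length ks}. LT N H ks vs rest (\<phi>(k := \<phi> k + t *\<^sub>R h)) A)"
    unfolding hs by (rule ext) (rule leibniz[OF N H a(1) lv lr])
  have "Dks (k # ks) (fill0 N H) \<phi> (h # hs) = (\<Sum>A\<in>Pow {..<length (k # ks)}. LT N H (k # ks) (h # vs) rest \<phi> A)"
    unfolding hs using leibniz[OF N H _ _ lr, of "k # ks" "h # vs"] a lv by simp
  also have "\<dots> = (\<Sum>A\<in>Pow {..<length ks}. LT N H (k # ks) (h # vs) rest \<phi> (Suc ` A) + LT N H (k # ks) (h # vs) rest \<phi> (insert 0 (Suc ` A)))"
    by (simp add: sum_Pow_Suc)
  finally show "((\<lambda>t. Dks ks (fill0 N H) (\<phi>(k := \<phi> k + t *\<^sub>R h)) hs) has_vector_derivative Dks (k # ks) (fill0 N H) \<phi> (h # hs)) (at 0)"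
    unfolding eq using leib_step[OF N H a(1) a(2) lv lr] by simp
qed

lemma Sm_fill0:
  fixes N :: "'e::euclidean_space jet \<Rightarrow> 'e list \<Rightarrow> 'e" and H :: "'e jet \<Rightarrow> 'e"
  assumes N: "Sm d (Suc m) N" and H: "Sm d 0 (lift H)"
  shows "Sm d m (fill0 N H)"
  unfolding Sm_def
proof (intro conjI)
  obtain S1 where S1: "finite S1" "dep S1 N" using N unfolding Sm_def by blast
  obtain S2 where S2: "finite S2" "dep S2 (lift H)" using H unfolding Sm_def by blast
  show "\<exists>S. finite S \<and> dep S (fill0 N H)"
  proof (intro exI conjI)
    show "finite (S1 \<union> S2)" using S1 S2 by simp
    show "dep (S1 \<union> S2) (fill0 N H)"
      unfolding dep_def
    proof (intro allI impI)
      fix \<phi> \<psi> :: "'e jet" assume a: "\<forall>l\<in>S1 \<union> S2. \<phi> l = \<psi> l"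
      have "N \<phi> = N \<psi>" using S1(2) a unfolding dep_def by blast
      moreover have "lift H \<phi> = lift H \<psi>" using S2(2) a unfolding dep_def by blast
      then have "H \<phi> = H \<psi>" unfolding lift_def by meson
      ultimately show "fill0 N H \<phi> = fill0 N H \<psi>" unfolding fill0_def by simp
    qed
  qed
  have D: "SmD d m (fill0 N H)" by (rule Sm_fill0_D[OF N H])
  then show "SmD d m (fill0 N H)" .
  have NL: "SmL d (Suc m) N" and HL: "SmL d 0 (lift H)" using N H unfolding Sm_def by auto
  have "\<forall>\<phi> hs i. length hs = length ks + m \<longrightarrow> i < length hs \<longrightarrow> linear (\<lambda>x. Dks ks (fill0 N H) \<phi> (hs[i := x]))"
    if "set ks \<subseteq> mindex d" for ks
    using that
  proof (induction ks)
    case Nil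
    show ?case
    proof (intro allI impI)
      fix \<phi> and hs :: "'e list" and i
      assume "length hs = length [] + m" "i < length hs"
      then have "linear (\<lambda>x. Dks [] N \<phi> ((H \<phi> # hs)[Suc i := x]))"
        using NL[unfolded SmL_def, rule_format, of "[]" "H \<phi> # hs" "Suc i" \<phi>] by simp
      then show "linear (\<lambda>x. Dks [] (fill0 N H) \<phi> (hs[i := x]))" by (simp add: fill0_def)
    qed
  next
    case (Cons k ks)
    have k: "k \<in> mindex d" and ks: "set ks \<subseteq> mindex d" using Cons.prems by auto
    show ?case
    proof (intro allI impI)
      fix \<phi> and hs :: "'e list" and i
      assume lh: "length hs = length (k # ks) + m" and i: "i < length hs"
      then obtain h0 hs' where hs: "hs = h0 # hs'" by (cases hs) auto
      have lh': "length hs' = length ks + m" using lh hs by simp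
      show "linear (\<lambda>x. Dks (k # ks) (fill0 N H) \<phi> (hs[i := x]))"
      proof (cases i)
        case (Suc i')
        have "linear (\<lambda>x. Dks (k # ks) (fill0 N H) \<phi> ((h0 # hs')[Suc i' := x]))"
        proof (rule lin_later)
          show "((\<lambda>t. Dks ks (fill0 N H) (\<psi>(k := \<psi> k + t *\<^sub>R h0)) (hs'[i' := x])) has_vector_derivative
              Dks (k # ks) (fill0 N H) \<psi> (h0 # hs'[i' := x])) (at 0)" for \<psi> x
            using D ks k lh' unfolding SmD_def by simp
          show "linear (\<lambda>x. Dks ks (fill0 N H) \<psi> (hs'[i' := x]))" for \<psi>
            using Cons.IH[OF ks] lh' i hs Suc by simp
        qed
        then show ?thesis using hs Suc by simp
      next
        case 0
        define vs where "vs = take (length ks) hs'"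
        define rest where "rest = drop (length ks) hs'"
        have hs': "hs' = vs @ rest" unfolding vs_def rest_def by simp
        have lv: "length vs = length ks" and lr: "length rest = m" using lh' unfolding vs_def rest_def by auto
        have eq: "Dks (k # ks) (fill0 N H) \<phi> (x # hs') =
          (\<Sum>A\<in>Pow {..<length ks}. LT N H (k # ks) (x # vs) rest \<phi> (Suc ` A) + LT N H (k # ks) (x # vs) rest \<phi> (insert 0 (Suc ` A)))" for x
        proof -
          have "Dks (k # ks) (fill0 N H) \<phi> (x # hs') = (\<Sum>A\<in>Pow {..<length (k # ks)}. LT N H (k # ks) (x # vs) rest \<phi> A)"
            unfolding hs' using leibniz[OF N H _ _ lr, of "k # ks" "x # vs"] Cons.prems lv by simp
          then show ?thesis by (simp add: sum_Pow_Suc)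
        qed
        have lin: "linear (\<lambda>x. LT N H (k # ks) (x # vs) rest \<phi> (Suc ` A) + LT N H (k # ks) (x # vs) rest \<phi> (insert 0 (Suc ` A)))" for A
        proof -
          let ?kc = "nths ks (-A)" and ?ka = "nths ks A" and ?vc = "nths vs (-A)" and ?va = "nths vs A"
          have skc: "set ?kc \<subseteq> mindex d" and ska: "set ?ka \<subseteq> mindex d" using ks set_nths_subset by fastforce+
          have lvc: "length ?vc = length ?kc" and lva: "length ?va = length ?ka" using lv by (auto intro: length_nths_eq)
          have l1: "linear (\<lambda>x. Dks (k # ?kc) N \<phi> ((x # ?vc @ Dks ?ka (lift H) \<phi> ?va # rest)[0 := x]))"
            using NL[unfolded SmL_def, rule_format, of "k # ?kc" "0 # ?vc @ Dks ?ka (lift H) \<phi> ?va # rest" 0 \<phi>]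
              skc k lvc lr by simp
          have l2: "linear (\<lambda>y. Dks ?kc N \<phi> ((?vc @ 0 # rest)[length ?vc := y]))"
            using NL[unfolded SmL_def, rule_format, of ?kc "?vc @ 0 # rest" "length ?vc" \<phi>]
              skc lvc lr by simp
          have l3: "linear (\<lambda>x. Dks (k # ?ka) (lift H) \<phi> ((0 # ?va)[0 := x]))"
            using HL[unfolded SmL_def, rule_format, of "k # ?ka" "0 # ?va" 0 \<phi>] ska k lva by simp
          have "linear (\<lambda>x. Dks (k # ?kc) N \<phi> (x # ?vc @ Dks ?ka (lift H) \<phi> ?va # rest))"
            using l1 by simp
          moreover have "linear ((\<lambda>y. Dks ?kc N \<phi> (?vc @ y # rest)) \<circ> (\<lambda>x. Dks (k # ?ka) (lift H) \<phi> (x # ?va)))"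
            using l2 l3 by (intro linear_compose) simp_all
          ultimately show ?thesis unfolding LT_Suc LT_ins o_def by (intro linear_compose_add) simp_all
        qed
        have "linear (\<lambda>x. Dks (k # ks) (fill0 N H) \<phi> (x # hs'))"
          unfolding eq by (rule linear_compose_sum) (use lin in blast)
        then show ?thesis using hs 0 by simp
      qed
    qed
  qed
  then show "SmL d m (fill0 N H)" unfolding SmL_def by blast
qed

lemma mset_nths_split: "mset (nths xs A) + mset (nths xs (-A)) = mset xs"
proof (induction xs arbitrary: A)
  case Nil then show ?case by simp
next
  case (Cons x xs)
  have c: "{j. Suc j \<notin> A} = - {j. Suc j \<in> A}" by auto
  show ?case using Cons.IH[of "{j. Suc j \<in> A}"] by (simp add: nths_Cons c)
qed

lemma DnzA_fill0:
  fixes N :: "'e::euclidean_space jet \<Rightarrow> 'e list \<Rightarrow> 'e" and H :: "'e jet \<Rightarrow> 'e"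
  assumes N: "Sm d (Suc m) N" and H: "Sm d 0 (lift H)" and ks: "set ks \<subseteq> mindex d"
    and nz: "DnzA m ks (fill0 N H)"
  shows "\<exists>A. DnzA (Suc m) (nths ks (-A)) N \<and> DnzA 0 (nths ks A) (lift H)"
proof -
  obtain \<phi> hs where lh: "length hs = length ks + m" and nz': "Dks ks (fill0 N H) \<phi> hs \<noteq> 0"
    using nz unfolding DnzA_def by blast
  define vs where "vs = take (length ks) hs"
  define rest where "rest = drop (length ks) hs"
  have hs: "hs = vs @ rest" unfolding vs_def rest_def by simp
  have lv: "length vs = length ks" and lr: "length rest = m" using lh unfolding vs_def rest_def by auto
  have "(\<Sum>A\<in>Pow {..<length ks}. LT N H ks vs rest \<phi> A) \<noteq> 0"
    using nz' leibniz[OF N H ks lv lr] hs by simp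
  then obtain A where "LT N H ks vs rest \<phi> A \<noteq> 0"
    using sum.not_neutral_contains_not_neutral by blast
  then have t: "Dks (nths ks (-A)) N \<phi> (nths vs (-A) @ Dks (nths ks A) (lift H) \<phi> (nths vs A) # rest) \<noteq> 0"
    unfolding LT_def .
  let ?kc = "nths ks (-A)" and ?ka = "nths ks A" and ?vc = "nths vs (-A)" and ?va = "nths vs A"
  have skc: "set ?kc \<subseteq> mindex d" using ks set_nths_subset by fastforce
  have lvc: "length ?vc = length ?kc" and lva: "length ?va = length ?ka" using lv by (auto intro: length_nths_eq)
  have "DnzA (Suc m) ?kc N" using t lvc lr unfolding DnzA_def
    by (intro exI[of _ \<phi>] exI[of _ "?vc @ Dks ?ka (lift H) \<phi> ?va # rest"]) simp
  moreover have "Dks ?ka (lift H) \<phi> ?va \<noteq> 0"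
  proof
    assume z: "Dks ?ka (lift H) \<phi> ?va = 0"
    have "linear (\<lambda>y. Dks ?kc N \<phi> ((?vc @ 0 # rest)[length ?vc := y]))"
      using N[unfolded Sm_def SmL_def, THEN conjunct2, THEN conjunct2, rule_format, of ?kc "?vc @ 0 # rest" "length ?vc" \<phi>]
        skc lvc lr by simp
    then have "Dks ?kc N \<phi> (?vc @ 0 # rest) = 0" using linear_0 by fastforce
    then show False using t z by simp
  qed
  then have "DnzA 0 ?ka (lift H)" using lva unfolding DnzA_def by auto
  ultimately show ?thesis by blast
qed


fun fillL :: "('e jet \<Rightarrow> 'e list \<Rightarrow> 'e) \<Rightarrow> ('e jet \<Rightarrow> 'e) list \<Rightarrow> 'e jet \<Rightarrow> 'e list \<Rightarrow> 'e" where
  "fillL N [] = N"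
| "fillL N (H # Hs) = fillL (fill0 N H) Hs"

lemma fillL_eq: "fillL N Hs \<phi> hs = N \<phi> (map (\<lambda>H. H \<phi>) Hs @ hs)"
  by (induction Hs arbitrary: N) (auto simp: fill0_def)

lemma Sm_fillL:
  fixes N :: "'e::euclidean_space jet \<Rightarrow> 'e list \<Rightarrow> 'e"
  assumes "Sm d (m + length Hs) N" "\<forall>H\<in>set Hs. Sm d 0 (lift H)"
  shows "Sm d m (fillL N Hs)"
  using assms
proof (induction Hs arbitrary: N)
  case Nil then show ?case by simp
next
  case (Cons H Hs)
  have "Sm d (Suc (m + length Hs)) N" using Cons.prems by simp
  then have "Sm d (m + length Hs) (fill0 N H)" using Cons.prems by (intro Sm_fill0) auto
  then show ?case using Cons by simp
qed

lemma wsum_nths: "sum_list (map w xs) = sum_list (map w (nths xs A)) + sum_list (map (w::_\<Rightarrow>real) (nths xs (-A)))"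
proof -
  have "sum_list (map w xs) = sum_mset (image_mset w (mset xs))" by (simp add: sum_mset_sum_list[symmetric])
  also have "\<dots> = sum_mset (image_mset w (mset (nths xs A) + mset (nths xs (-A))))" by (simp add: mset_nths_split)
  also have "\<dots> = sum_list (map w (nths xs A)) + sum_list (map w (nths xs (-A)))"
    by (simp add: sum_mset_sum_list[symmetric])
  finally show ?thesis .
qed

lemma DnzA_fillL_w:
  fixes N :: "'e::euclidean_space jet \<Rightarrow> 'e list \<Rightarrow> 'e" and w :: "mi \<Rightarrow> real"
  assumes "Sm d (m + length HBs) N"
    and "\<forall>Hb\<in>set HBs. Sm d 0 (lift (fst Hb)) \<and>
          (\<forall>ks. set ks \<subseteq> mindex d \<longrightarrow> DnzA 0 ks (lift (fst Hb)) \<longrightarrow> sum_list (map w ks) \<le> snd Hb)"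
    and "set ks \<subseteq> mindex d" "DnzA m ks (fillL N (map fst HBs))"
  shows "\<exists>ks0. set ks0 \<subseteq> set ks \<and> DnzA (m + length HBs) ks0 N \<and>
     sum_list (map w ks) \<le> sum_list (map w ks0) + sum_list (map snd HBs)"
  using assms
proof (induction HBs arbitrary: N)
  case Nil
  then show ?case by auto
next
  case (Cons Hb HBs)
  obtain H b where Hb: "Hb = (H, b)" by (cases Hb)
  have N: "Sm d (Suc (m + length HBs)) N" using Cons.prems by simp
  have H: "Sm d 0 (lift H)" and Hw: "\<And>ks. set ks \<subseteq> mindex d \<Longrightarrow> DnzA 0 ks (lift H) \<Longrightarrow> sum_list (map w ks) \<le> b"
    using Cons.prems(2) Hb by auto
  have F: "Sm d (m + length HBs) (fill0 N H)" by (rule Sm_fill0[OF N H])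
  have "DnzA m ks (fillL (fill0 N H) (map fst HBs))" using Cons.prems(4) Hb by simp
  then obtain ks1 where k1: "set ks1 \<subseteq> set ks" "DnzA (m + length HBs) ks1 (fill0 N H)"
    "sum_list (map w ks) \<le> sum_list (map w ks1) + sum_list (map snd HBs)"
    using Cons.IH[OF F _ Cons.prems(3)] Cons.prems(2) by auto
  have sk1: "set ks1 \<subseteq> mindex d" using k1(1) Cons.prems(3) by auto
  obtain A where A: "DnzA (Suc (m + length HBs)) (nths ks1 (-A)) N" "DnzA 0 (nths ks1 A) (lift H)"
    using DnzA_fill0[OF N H sk1 k1(2)] by blast
  have "sum_list (map w (nths ks1 A)) \<le> b"
    using Hw[OF _ A(2)] sk1 set_nths_subset by fastforce
  then have "sum_list (map w ks) \<le> sum_list (map w (nths ks1 (-A))) + sum_list (map snd (Hb # HBs))"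
    using k1(3) wsum_nths[of w ks1 A] Hb by simp
  moreover have "set (nths ks1 (-A)) \<subseteq> set ks" using k1(1) set_nths_subset by fastforce
  ultimately show ?case using A(1) by (intro exI[of _ "nths ks1 (-A)"]) simp
qed

lemma DnzA_Dks_gen: "DnzA (m + length kk) ks (Dks kk G) \<Longrightarrow> DnzA m (ks @ kk) G"
  unfolding DnzA_def by (fastforce simp: Dks_append ac_simps)

lemma pd_eq:
  fixes G :: "'e::euclidean_space jet \<Rightarrow> 'e list \<Rightarrow> 'e"
  assumes "finite S" "dep S G"
  shows "pd d i G = sumG (S \<inter> mindex d) (\<lambda>l. fill0 (Dks [l] G) (projG (add_unit i l)))"
proof (intro ext)
  fix \<phi> hs
  let ?F = "\<lambda>l. Dks [l] G \<phi> (\<phi> (add_unit i l) # hs)"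
  have "infsum ?F (mindex d) = infsum ?F (S \<inter> mindex d)"
    by (rule infsum_cong_neutral) (auto intro: Dks_zero_notin[OF assms(2)])
  also have "\<dots> = sum ?F (S \<inter> mindex d)" using assms(1) by simp
  finally show "pd d i G \<phi> hs = sumG (S \<inter> mindex d) (\<lambda>l. fill0 (Dks [l] G) (projG (add_unit i l))) \<phi> hs"
    unfolding pd_def sumG_def fill0_def projG_def by simp
qed

lemma Sm_pd:
  fixes G :: "'e::euclidean_space jet \<Rightarrow> 'e list \<Rightarrow> 'e"
  assumes "Sm d m G"
  shows "Sm d m (pd d i G)"
proof -
  obtain S where S: "finite S" "dep S G" using assms unfolding Sm_def by blast
  have "Sm d m (sumG (S \<inter> mindex d) (\<lambda>l. fill0 (Dks [l] G) (projG (add_unit i l))))"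
  proof (rule Sm_sumG)
    show "finite (S \<inter> mindex d)" using S by simp
    fix l assume "l \<in> S \<inter> mindex d"
    then have "Sm d (m + length [l]) (Dks [l] G)" using Sm_Dks[OF assms, of "[l]"] by simp
    then show "Sm d m (fill0 (Dks [l] G) (projG (add_unit i l)))"
      by (intro Sm_fill0 Sm_proj) simp
  qed
  then show ?thesis using pd_eq[OF S] by simp
qed

lemma DnzA_pd_w:
  fixes G :: "'e::euclidean_space jet \<Rightarrow> 'e list \<Rightarrow> 'e" and w :: "mi \<Rightarrow> real"
  assumes G: "Sm d m G" and ks: "set ks \<subseteq> mindex d" and nz: "DnzA m ks (pd d i G)"
    and hw: "\<And>l. l \<in> mindex d \<Longrightarrow> 0 \<le> w l + c \<and> w (add_unit i l) \<le> w l + c"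
  shows "\<exists>ks'. set ks' \<subseteq> mindex d \<and> DnzA m ks' G \<and> sum_list (map w ks) \<le> sum_list (map w ks') + c"
proof -
  obtain S where S: "finite S" "dep S G" using G unfolding Sm_def by blast
  have Dl: "Sm d (Suc m) (Dks [l] G)" if "l \<in> mindex d" for l
    using Sm_Dks[OF G, of "[l]"] that by simp
  have Fl: "Sm d m (fill0 (Dks [l] G) (projG (add_unit i l)))" if "l \<in> mindex d" for l
    using Dl[OF that] by (intro Sm_fill0 Sm_proj)
  have nzs: "DnzA m ks (sumG (S \<inter> mindex d) (\<lambda>l. fill0 (Dks [l] G) (projG (add_unit i l))))"
    using nz pd_eq[OF S] by simp
  have FD: "\<And>l. l \<in> S \<inter> mindex d \<Longrightarrow> SmD d m (fill0 (Dks [l] G) (projG (add_unit i l)))"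
    by (intro Sm_SmD Fl) simp
  have "\<exists>l\<in>S \<inter> mindex d. DnzA m ks (fill0 (Dks [l] G) (projG (add_unit i l)))"
    by (rule DnzA_sumG[OF FD ks nzs])
  then obtain l where l: "l \<in> S \<inter> mindex d" and nzl: "DnzA m ks (fill0 (Dks [l] G) (projG (add_unit i l)))"
    by (rule bexE)
  have lm: "l \<in> mindex d" using l by simp
  have "\<exists>A. DnzA (Suc m) (nths ks (-A)) (Dks [l] G) \<and> DnzA 0 (nths ks A) (lift (projG (add_unit i l)) :: 'e jet \<Rightarrow> _)"
    by (rule DnzA_fill0[OF Dl[OF lm] Sm_proj ks nzl])
  then obtain A where A: "DnzA (Suc m) (nths ks (-A)) (Dks [l] G)" "DnzA 0 (nths ks A) (lift (projG (add_unit i l)) :: 'e jet \<Rightarrow> _)"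
    by blast
  have A1: "DnzA m (nths ks (-A) @ [l]) G" using A(1) DnzA_Dks_gen[of m "[l]"] by simp
  have A2: "nths ks A = [] \<or> nths ks A = [add_unit i l]" using Dnonzero_proj[OF A(2)] .
  have "sum_list (map w (nths ks A)) \<le> w l + c" using A2 hw[OF lm] by auto
  moreover have "sum_list (map w (nths ks (-A) @ [l])) = sum_list (map w (nths ks (-A))) + w l" by simp
  ultimately have "sum_list (map w ks) \<le> sum_list (map w (nths ks (-A) @ [l])) + c"
    using wsum_nths[of w ks A] by linarith
  moreover have "set (nths ks (-A) @ [l]) \<subseteq> mindex d" using ks lm set_nths_subset by fastforce
  ultimately show ?thesis using A1 by blast
qed

lemma Sm_pd_pow:
  fixes G :: "'e::euclidean_space jet \<Rightarrow> 'e list \<Rightarrow> 'e"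
  shows "Sm d m G \<Longrightarrow> Sm d m ((pd d i ^^ n) G)"
  by (induction n) (auto intro: Sm_pd)

lemma Sm_foldr_pd:
  fixes G :: "'e::euclidean_space jet \<Rightarrow> 'e list \<Rightarrow> 'e"
  shows "Sm d m G \<Longrightarrow> Sm d m (foldr (\<lambda>i H. (pd d i ^^ (c i)) H) ixs G)"
  by (induction ixs) (auto intro: Sm_pd_pow)

lemma DnzA_pd_pow_w:
  fixes G :: "'e::euclidean_space jet \<Rightarrow> 'e list \<Rightarrow> 'e" and w :: "mi \<Rightarrow> real"
  assumes G: "Sm d m G"
    and hw: "\<And>l. l \<in> mindex d \<Longrightarrow> 0 \<le> w l + c \<and> w (add_unit i l) \<le> w l + c"
  shows "set ks \<subseteq> mindex d \<Longrightarrow> DnzA m ks ((pd d i ^^ n) G) \<Longrightarrow>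
    \<exists>ks'. set ks' \<subseteq> mindex d \<and> DnzA m ks' G \<and> sum_list (map w ks) \<le> sum_list (map w ks') + real n * c"
proof (induction n arbitrary: ks)
  case 0 then show ?case by auto
next
  case (Suc n)
  have nz1: "DnzA m ks (pd d i ((pd d i ^^ n) G))" using Suc.prems by simp
  obtain ks1 where k1: "set ks1 \<subseteq> mindex d" "DnzA m ks1 ((pd d i ^^ n) G)"
      "sum_list (map w ks) \<le> sum_list (map w ks1) + c"
    using DnzA_pd_w[where w=w and c=c and i=i, OF Sm_pd_pow[OF G, where i=i and n=n] Suc.prems(1) nz1 hw] by blast
  then obtain ks' where "set ks' \<subseteq> mindex d" "DnzA m ks' G" "sum_list (map w ks1) \<le> sum_list (map w ks') + real n * c"
    using Suc.IH by blast
  then show ?case using k1(3) by (intro exI[of _ ks']) (simp add: algebra_simps)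
qed

lemma DnzA_foldr_pd_w:
  fixes G :: "'e::euclidean_space jet \<Rightarrow> 'e list \<Rightarrow> 'e" and w :: "mi \<Rightarrow> real"
  assumes G: "Sm d m G"
  shows "(\<And>i l. i \<in> set ixs \<Longrightarrow> l \<in> mindex d \<Longrightarrow> 0 \<le> w l + cw i \<and> w (add_unit i l) \<le> w l + cw i) \<Longrightarrow>
    set ks \<subseteq> mindex d \<Longrightarrow> DnzA m ks (foldr (\<lambda>i H. (pd d i ^^ (c i)) H) ixs G) \<Longrightarrow>
    \<exists>ks'. set ks' \<subseteq> mindex d \<and> DnzA m ks' G \<and>
       sum_list (map w ks) \<le> sum_list (map w ks') + sum_list (map (\<lambda>i. real (c i) * cw i) ixs)"
proof (induction ixs arbitrary: ks)
  case Nil then show ?case by auto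
next
  case (Cons i ixs)
  have hwi: "\<And>l. l \<in> mindex d \<Longrightarrow> 0 \<le> w l + cw i \<and> w (add_unit i l) \<le> w l + cw i"
    using Cons.prems(1) by simp
  have nz: "DnzA m ks ((pd d i ^^ c i) (foldr (\<lambda>i H. (pd d i ^^ (c i)) H) ixs G))" using Cons.prems(3) by simp
  obtain ks1 where k1: "set ks1 \<subseteq> mindex d" "DnzA m ks1 (foldr (\<lambda>i H. (pd d i ^^ (c i)) H) ixs G)"
      "sum_list (map w ks) \<le> sum_list (map w ks1) + real (c i) * cw i"
    using DnzA_pd_pow_w[where w=w and c="cw i" and i=i and n="c i", OF Sm_foldr_pd[OF G, where c=c and ixs=ixs] hwi Cons.prems(2) nz] by blast
  obtain ks' where "set ks' \<subseteq> mindex d" "DnzA m ks' G"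
      "sum_list (map w ks1) \<le> sum_list (map w ks') + sum_list (map (\<lambda>i. real (c i) * cw i) ixs)"
    using Cons.IH[OF _ k1(1) k1(2)] Cons.prems(1) by (metis list.set_intros(2))
  then show ?case using k1(3) by (intro exI[of _ ks']) (simp add: algebra_simps)
qed


lemma dir_linear:
  fixes g :: "'e::real_normed_vector jet \<Rightarrow> 'f::real_normed_vector" and D :: "'e jet \<Rightarrow> 'e \<Rightarrow> 'f"
  assumes deriv: "\<And>\<psi> h. ((\<lambda>t. g (\<psi>(k := \<psi> k + t *\<^sub>R h))) has_vector_derivative D \<psi> h) (at 0)"
    and cont: "\<And>h. continuous_on UNIV (\<lambda>\<psi>. D \<psi> h)"
  shows "linear (D \<phi>)"
proof (rule linearI)
  fix c :: real and x
  have d1: "((\<lambda>t. g (\<phi>(k := \<phi> k + t *\<^sub>R (c *\<^sub>R x)))) has_vector_derivative D \<phi> (c *\<^sub>R x)) (at 0)"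
    by (rule deriv)
  have dm0: "((\<lambda>t::real. c * t) has_real_derivative c) (at 0)"
    by (auto intro!: derivative_eq_intros)
  have dm: "((\<lambda>t::real. c * t) has_vector_derivative c) (at 0)"
    using dm0 by (simp add: has_real_derivative_iff_has_vector_derivative)
  have dg: "((\<lambda>s. g (\<phi>(k := \<phi> k + s *\<^sub>R x))) has_vector_derivative D \<phi> x) (at (c * 0))"
    using deriv[of \<phi> x] by simp
  have "((\<lambda>s. g (\<phi>(k := \<phi> k + s *\<^sub>R x))) \<circ> (\<lambda>t. c * t) has_vector_derivative c *\<^sub>R D \<phi> x) (at 0)"
    by (rule vector_diff_chain_at[OF dm dg])
  moreover have "(\<lambda>s. g (\<phi>(k := \<phi> k + s *\<^sub>R x))) \<circ> (\<lambda>t. c * t) = (\<lambda>t. g (\<phi>(k := \<phi> k + t *\<^sub>R (c *\<^sub>R x))))"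
    by (auto simp: o_def mult.commute)
  ultimately show "D \<phi> (c *\<^sub>R x) = c *\<^sub>R D \<phi> x"
    using d1 vector_derivative_unique_at by metis
next
  fix x y
  define \<Phi> where "\<Phi> = (\<lambda>a b. \<phi>(k := \<phi> k + a *\<^sub>R x + b *\<^sub>R y))"
  define v where "v = D \<phi> x + D \<phi> y"
  have \<Phi>0: "\<Phi> 0 0 = \<phi>" by (simp add: \<Phi>_def)
  have cD: "continuous_on UNIV (\<lambda>p::real\<times>real. D (\<Phi> (fst p) (snd p)) y)"
  proof (rule continuous_on_compose2[OF cont[of y]])
    show "continuous_on UNIV (\<lambda>p::real\<times>real. \<Phi> (fst p) (snd p))"
    proof (rule continuous_on_coordinatewise_then_product)
      fix l
      show "continuous_on UNIV (\<lambda>p::real\<times>real. \<Phi> (fst p) (snd p) l)"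
        by (cases "l = k") (auto simp: \<Phi>_def intro!: continuous_intros)
    qed
  qed simp
  have key: "((\<lambda>t. g (\<Phi> t t)) has_vector_derivative v) (at 0)"
  proof -
    have bl: "bounded_linear (\<lambda>t::real. t *\<^sub>R v)" by (rule bounded_linear_scaleR_left)
    have "\<forall>e>0. \<exists>\<delta>>0. \<forall>t. norm (t - 0) < \<delta> \<longrightarrow>
        norm (g (\<Phi> t t) - g (\<Phi> 0 0) - (t - 0) *\<^sub>R v) \<le> e * norm (t - (0::real))"
    proof (intro allI impI)
      fix e :: real assume e: "e > 0"
      then have e2: "e / 2 > 0" by simp
      have dx: "((\<lambda>t. g (\<phi>(k := \<phi> k + t *\<^sub>R x))) has_derivative (\<lambda>t. t *\<^sub>R D \<phi> x)) (at 0)"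
        using deriv[of \<phi> x] unfolding has_vector_derivative_def .
      then obtain \<delta>1 where \<delta>1: "\<delta>1 > 0" "\<And>t. norm (t - 0) < \<delta>1 \<Longrightarrow>
          norm (g (\<phi>(k := \<phi> k + t *\<^sub>R x)) - g (\<phi>(k := \<phi> k + 0 *\<^sub>R x)) - (t - 0) *\<^sub>R D \<phi> x) \<le> e / 2 * norm (t - (0::real))"
        unfolding has_derivative_at_alt using e2 by blast
      obtain \<delta>2 where \<delta>2: "\<delta>2 > 0" "\<And>p. dist p (0::real, 0::real) < \<delta>2 \<Longrightarrow>
          dist (D (\<Phi> (fst p) (snd p)) y) (D (\<Phi> 0 0) y) < e / 2"
        using cD e2 unfolding continuous_on_iff by (metis UNIV_I fst_conv snd_conv)
      define \<delta> where "\<delta> = min \<delta>1 (\<delta>2 / 2)"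
      show "\<exists>\<delta>>0. \<forall>t. norm (t - 0) < \<delta> \<longrightarrow>
          norm (g (\<Phi> t t) - g (\<Phi> 0 0) - (t - 0) *\<^sub>R v) \<le> e * norm (t - (0::real))"
      proof (intro exI[of _ \<delta>] conjI allI impI)
        show "\<delta> > 0" using \<delta>1 \<delta>2 by (simp add: \<delta>_def)
        fix t :: real assume "norm (t - 0) < \<delta>"
        then have t1: "norm (t - 0) < \<delta>1" and t2: "\<bar>t\<bar> < \<delta>2 / 2" by (auto simp: \<delta>_def)
        have A: "norm (g (\<Phi> t 0) - g \<phi> - t *\<^sub>R D \<phi> x) \<le> e / 2 * \<bar>t\<bar>"
          using \<delta>1(2)[OF t1] by (simp add: \<Phi>_def)
        have B: "norm (g (\<Phi> t t) - g (\<Phi> t 0) - t *\<^sub>R D \<phi> y) \<le> e / 2 * \<bar>t\<bar>"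
        proof -
          define u where "u = (\<lambda>b. g (\<Phi> t b) - b *\<^sub>R D \<phi> y)"
          define S where "S = {-\<bar>t\<bar>..\<bar>t\<bar>}"
          have du: "(u has_derivative (\<lambda>s. s *\<^sub>R (D (\<Phi> t b) y - D \<phi> y))) (at b within S)" for b
          proof -
            have "(\<Phi> t b)(k := \<Phi> t b k + s *\<^sub>R y) = \<Phi> t (b + s)" for s
              by (simp add: \<Phi>_def algebra_simps)
            then have e1: "((\<lambda>s. g (\<Phi> t (b + s))) has_vector_derivative D (\<Phi> t b) y) (at 0)"
              using deriv[of "\<Phi> t b" y] by simp
            have e0: "((\<lambda>b'. b' - b) has_vector_derivative 1) (at b)"
              by (auto intro!: derivative_eq_intros)
            have e1': "((\<lambda>s. g (\<Phi> t (b + s))) has_vector_derivative D (\<Phi> t b) y) (at (b - b))"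
              using e1 by simp
            have "((\<lambda>s. g (\<Phi> t (b + s))) \<circ> (\<lambda>b'. b' - b) has_vector_derivative 1 *\<^sub>R D (\<Phi> t b) y) (at b)"
              by (rule vector_diff_chain_at[OF e0 e1'])
            then have e2: "((\<lambda>b'. g (\<Phi> t b')) has_vector_derivative D (\<Phi> t b) y) (at b)"
              by (simp add: o_def)
            have e3: "((\<lambda>b'. b' *\<^sub>R D \<phi> y) has_vector_derivative D \<phi> y) (at b)"
              unfolding has_vector_derivative_def
              by (rule bounded_linear_imp_has_derivative[OF bounded_linear_scaleR_left])
            have "(u has_vector_derivative D (\<Phi> t b) y - D \<phi> y) (at b)"
              unfolding u_def by (rule has_vector_derivative_diff[OF e2 e3])
            then show ?thesis unfolding has_vector_derivative_def by (rule has_derivative_at_withinI)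
          qed
          have bnd: "onorm (\<lambda>s::real. s *\<^sub>R (D (\<Phi> t b) y - D \<phi> y)) \<le> e / 2" if "b \<in> S" for b
          proof -
            have "\<bar>b\<bar> \<le> \<bar>t\<bar>" using that by (auto simp: S_def)
            have "dist (t, b) (0, 0) = sqrt (t\<^sup>2 + b\<^sup>2)" by (simp add: dist_Pair_Pair)
            also have "\<dots> \<le> \<bar>t\<bar> + \<bar>b\<bar>" by (rule sqrt_sum_squares_le_sum_abs)
            also have "\<dots> < \<delta>2" using t2 \<open>\<bar>b\<bar> \<le> \<bar>t\<bar>\<close> by linarith
            finally have "dist (D (\<Phi> t b) y) (D (\<Phi> 0 0) y) < e / 2" using \<delta>2(2)[of "(t, b)"] by simp
            then have "norm (D (\<Phi> t b) y - D \<phi> y) < e / 2" by (simp add: dist_norm \<Phi>0)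
            moreover have "onorm (\<lambda>s::real. s *\<^sub>R (D (\<Phi> t b) y - D \<phi> y)) = norm (D (\<Phi> t b) y - D \<phi> y)"
              using onorm_scaleR_left[OF bounded_linear_ident] by (simp add: onorm_id)
            ultimately show ?thesis by simp
          qed
          have "norm (u t - u 0) \<le> e / 2 * norm (t - 0)"
            by (rule differentiable_bound[where S=S, OF _ du bnd]) (auto simp: S_def)
          then show ?thesis by (simp add: u_def algebra_simps)
        qed
        have "g (\<Phi> t t) - g (\<Phi> 0 0) - (t - 0) *\<^sub>R v =
            (g (\<Phi> t 0) - g \<phi> - t *\<^sub>R D \<phi> x) + (g (\<Phi> t t) - g (\<Phi> t 0) - t *\<^sub>R D \<phi> y)"
          by (simp add: v_def \<Phi>0 algebra_simps)
        then have "norm (g (\<Phi> t t) - g (\<Phi> 0 0) - (t - 0) *\<^sub>R v) \<le>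
            norm (g (\<Phi> t 0) - g \<phi> - t *\<^sub>R D \<phi> x) + norm (g (\<Phi> t t) - g (\<Phi> t 0) - t *\<^sub>R D \<phi> y)"
          by (metis norm_triangle_ineq)
        then show "norm (g (\<Phi> t t) - g (\<Phi> 0 0) - (t - 0) *\<^sub>R v) \<le> e * norm (t - 0)"
          using A B by simp
      qed
    qed
    with bl show ?thesis unfolding has_vector_derivative_def has_derivative_at_alt by simp
  qed
  moreover have "(\<lambda>t. g (\<Phi> t t)) = (\<lambda>t. g (\<phi>(k := \<phi> k + t *\<^sub>R (x + y))))"
    by (simp add: \<Phi>_def algebra_simps scaleR_add_right)
  ultimately show "D \<phi> (x + y) = D \<phi> x + D \<phi> y"
    using deriv[of \<phi> "x + y"] vector_derivative_unique_at unfolding v_def by metis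
qed


lemma Sm_smooth:
  fixes g :: "'e::euclidean_space jet \<Rightarrow> 'e"
  assumes sm: "smooth_jet d g" and S: "finite S" "dep S (lift g)"
  shows "Sm d 0 (lift g)"
  unfolding Sm_def
proof (intro conjI)
  show "\<exists>S. finite S \<and> dep S (lift g)" using S by blast
  show D: "SmD d 0 (lift g)" using sm unfolding smooth_jet_def SmD_def by simp
  have "\<forall>\<phi> hs i. length hs = length ks \<longrightarrow> i < length hs \<longrightarrow> linear (\<lambda>x. Dks ks (lift g) \<phi> (hs[i := x]))"
    if "set ks \<subseteq> mindex d" for ks
    using that
  proof (induction ks)
    case Nil then show ?case by simp
  next
    case (Cons k ks)
    have k: "k \<in> mindex d" and ks: "set ks \<subseteq> mindex d" using Cons.prems by auto
    show ?case
    proof (intro allI impI)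
      fix \<phi> and hs :: "'e list" and i
      assume lh: "length hs = length (k # ks)" and i: "i < length hs"
      then obtain h0 hs' where hs: "hs = h0 # hs'" by (cases hs) auto
      have lh': "length hs' = length ks" using lh hs by simp
      show "linear (\<lambda>x. Dks (k # ks) (lift g) \<phi> (hs[i := x]))"
      proof (cases i)
        case (Suc i')
        have "linear (\<lambda>x. Dks (k # ks) (lift g) \<phi> ((h0 # hs')[Suc i' := x]))"
        proof (rule lin_later)
          show "((\<lambda>t. Dks ks (lift g) (\<psi>(k := \<psi> k + t *\<^sub>R h0)) (hs'[i' := x])) has_vector_derivative
              Dks (k # ks) (lift g) \<psi> (h0 # hs'[i' := x])) (at 0)" for \<psi> x
            using D ks k lh' unfolding SmD_def by simp
          show "linear (\<lambda>x. Dks ks (lift g) \<psi> (hs'[i' := x]))" for \<psi>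
            using Cons.IH[OF ks] lh' i hs Suc by simp
        qed
        then show ?thesis using hs Suc by simp
      next
        case 0
        have "linear (\<lambda>h. Dks (k # ks) (lift g) \<phi> (h # hs'))"
        proof (rule dir_linear[where g = "\<lambda>\<psi>. Dks ks (lift g) \<psi> hs'" and k = k])
          show "((\<lambda>t. Dks ks (lift g) (\<psi>(k := \<psi> k + t *\<^sub>R h)) hs') has_vector_derivative
              Dks (k # ks) (lift g) \<psi> (h # hs')) (at 0)" for \<psi> h
            using sm k ks unfolding smooth_jet_def by blast
          show "continuous_on UNIV (\<lambda>\<psi>. Dks (k # ks) (lift g) \<psi> (h # hs'))" for h
            using sm k ks unfolding smooth_jet_def by (metis insert_subset list.simps(15))
        qed
        then show ?thesis using hs 0 by simp
      qed
    qed
  qed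
  then show "SmL d 0 (lift g)" unfolding SmL_def by simp
qed

lemma finite_Jidx: "finite (Jidx d)"
proof (rule finite_subset)
  show "Jidx d \<subseteq> {xs. set xs \<subseteq> {0, 1} \<and> length xs = d}"
  proof
    fix k assume "k \<in> Jidx d"
    then have l: "length k = d" and s: "sdeg k < 2" by (auto simp: Jidx_def mindex_def)
    have "set k \<subseteq> {0, 1}"
    proof (cases k)
      case Nil then show ?thesis by simp
    next
      case (Cons x xs)
      then have "2 * x + sum_list xs < 2" using s by (simp add: sdeg_def)
      then have "x = 0" "sum_list xs \<le> 1" by auto
      moreover have "\<forall>y\<in>set xs. y \<le> sum_list xs" using member_le_sum_list by blast
      ultimately show ?thesis using Cons by force
    qed
    then show "k \<in> {xs. set xs \<subseteq> {0, 1} \<and> length xs = d}" using l by simp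
  qed
  show "finite {xs. set xs \<subseteq> {0::nat, 1} \<and> length xs = d}" by (rule finite_lists_length_eq) simp
qed

lemma dep_on_J: "on_J d g \<Longrightarrow> dep (Jidx d) (lift g)"
  unfolding on_J_def dep_def lift_def by auto

lemma Sm_f:
  fixes g :: "'e::euclidean_space jet \<Rightarrow> 'e"
  assumes "smooth_jet d g" "on_J d g"
  shows "Sm d 0 (lift g)"
  using Sm_smooth[OF assms(1) finite_Jidx dep_on_J[OF assms(2)]] .


subsection \<open>The nonlinearity P\<close>

lemma Sm_fillL_proj:
  fixes F :: "'e::euclidean_space list \<Rightarrow> 'e"
  assumes "multilin (length ls) F"
  shows "Sm d 0 (fillL (constG F) (map projG ls))"
  by (rule Sm_fillL) (auto intro: Sm_constG[OF assms] Sm_proj)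

lemma proj_bound:
  assumes "DnzA 0 ks (lift (projG l) :: 'e::real_normed_vector jet \<Rightarrow> _)"
  shows "sum_list (map w ks) \<le> max 0 ((w::mi \<Rightarrow> real) l)"
  using Dnonzero_proj[OF assms] by auto

lemma DnzA_fillL_proj:
  fixes F :: "'e::euclidean_space list \<Rightarrow> 'e" and w :: "mi \<Rightarrow> real"
  assumes "multilin (length ls) F" "set ks \<subseteq> mindex d" "DnzA 0 ks (fillL (constG F) (map projG ls))"
  shows "sum_list (map w ks) \<le> sum_list (map (\<lambda>l. max 0 (w l)) ls)"
proof -
  define HBs where "HBs = map (\<lambda>l. (projG l :: 'e jet \<Rightarrow> 'e, max 0 (w l))) ls"
  have m: "map fst HBs = map projG ls" "map snd HBs = map (\<lambda>l. max 0 (w l)) ls" "length HBs = length ls"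
    by (simp_all add: HBs_def o_def)
  have "\<exists>ks0. set ks0 \<subseteq> set ks \<and> DnzA (0 + length HBs) ks0 (constG F) \<and>
     sum_list (map w ks) \<le> sum_list (map w ks0) + sum_list (map snd HBs)"
  proof (rule DnzA_fillL_w)
    show "Sm d (0 + length HBs) (constG F)" using Sm_constG[OF assms(1)] m(3) by simp
    show "\<forall>Hb\<in>set HBs. Sm d 0 (lift (fst Hb)) \<and>
        (\<forall>ks. set ks \<subseteq> mindex d \<longrightarrow> DnzA 0 ks (lift (fst Hb)) \<longrightarrow> sum_list (map w ks) \<le> snd Hb)"
      unfolding HBs_def using Sm_proj proj_bound by auto
    show "set ks \<subseteq> mindex d" by fact
    show "DnzA 0 ks (fillL (constG F) (map fst HBs))" using assms(3) m(1) by simp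
  qed
  then obtain ks0 where "DnzA (length HBs) ks0 (constG F)" "sum_list (map w ks) \<le> sum_list (map w ks0) + sum_list (map snd HBs)"
    by auto
  then show ?thesis using DnzA_constG m(2) by fastforce
qed

definition FT :: "nat \<Rightarrow> nat \<Rightarrow> ('e list \<Rightarrow> 'e) \<Rightarrow> 'e jet \<Rightarrow> 'e list \<Rightarrow> 'e" where
  "FT d p F = fillL (constG F) (map projG (replicate p (zero_mi d)))"

definition BT :: "nat \<Rightarrow> nat \<Rightarrow> (nat \<Rightarrow> 'e list \<Rightarrow> 'e) \<Rightarrow> nat \<Rightarrow> 'e jet \<Rightarrow> 'e list \<Rightarrow> 'e" where
  "BT d q B i = fillL (constG (B i)) (map projG (unit_mi d i # replicate q (zero_mi d)))"

lemma FT_eq: "FT d p F \<phi> [] = Fterm d p F \<phi>"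
  by (simp add: FT_def fillL_eq Fterm_def projG_def map_replicate_const o_def constG_def)

lemma BT_eq: "sumG {1..<d} (BT d q B) \<phi> [] = Bterm d q B (\<phi> :: 'e::real_normed_vector jet)"
  by (simp add: BT_def sumG_def fillL_eq Bterm_def projG_def map_replicate_const o_def constG_def fill0_def)

lemma sumG_bool: "sumG (UNIV::bool set) (\<lambda>b. if b then X else Y) \<phi> hs = X \<phi> hs + Y \<phi> hs"
  by (simp add: sumG_def UNIV_bool add.commute)

lemma P_props:
  fixes F :: "'e::euclidean_space list \<Rightarrow> 'e" and w :: "mi \<Rightarrow> real"
  assumes F: "multilin p F"
    and P: "P = Fterm d p F \<or> (odd p \<and> q = (p - 1) div 2 \<and> (\<forall>i. multilin (q + 1) (B i)) \<and>
          P = (\<lambda>\<phi>. Fterm d p F \<phi> + Bterm d q B \<phi>))"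
  shows "Sm d 0 (lift P)"
    and "\<And>ks. set ks \<subseteq> mindex d \<Longrightarrow> DnzA 0 ks (lift P) \<Longrightarrow>
      sum_list (map w ks) \<le> real p * max 0 (w (zero_mi d)) \<or>
      (odd p \<and> q = (p - 1) div 2 \<and> (\<exists>i\<in>{1..<d}. sum_list (map w ks) \<le> max 0 (w (unit_mi d i)) + real q * max 0 (w (zero_mi d))))"
proof -
  define S where "S = insert (zero_mi d) (unit_mi d ` {1..<d})"
  have fS: "finite S" by (simp add: S_def)
  have depP: "dep S (lift P)"
    unfolding dep_def lift_def
  proof (intro allI impI)
    fix \<phi> \<psi> :: "'e jet" assume a: "\<forall>l\<in>S. \<phi> l = \<psi> l"
    have z: "\<phi> (zero_mi d) = \<psi> (zero_mi d)" using a by (simp add: S_def)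
    have u: "\<And>i. i \<in> {1..<d} \<Longrightarrow> \<phi> (unit_mi d i) = \<psi> (unit_mi d i)" using a by (simp add: S_def)
    have "Fterm d p F \<phi> = Fterm d p F \<psi>" using z by (simp add: Fterm_def)
    moreover have "Bterm d q B \<phi> = Bterm d q B \<psi>" using z u unfolding Bterm_def by (intro sum.cong) auto
    ultimately show "(\<lambda>hs. P \<phi>) = (\<lambda>hs. P \<psi>)" using P by auto
  qed
  have lF: "multilin (length (replicate p (zero_mi d))) F" using F by simp
  have SmFT: "Sm d 0 (FT d p F :: 'e jet \<Rightarrow> _)" unfolding FT_def by (rule Sm_fillL_proj[OF lF])
  have bFT: "sum_list (map w ks) \<le> real p * max 0 (w (zero_mi d))"
    if "set ks \<subseteq> mindex d" "DnzA 0 ks (FT d p F :: 'e jet \<Rightarrow> _)" for ks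
    using DnzA_fillL_proj[OF lF that(1), of w] that(2) by (simp add: FT_def sum_list_replicate)
  show "Sm d 0 (lift P)"
  proof (cases "P = Fterm d p F")
    case True
    show ?thesis by (rule Sm_cong[OF SmFT _ fS depP]) (simp add: True FT_eq lift_def)
  next
    case False
    then have B: "\<forall>i. multilin (q + 1) (B i)" and PB: "P = (\<lambda>\<phi>. Fterm d p F \<phi> + Bterm d q B \<phi>)" using P by auto
    have SmBT: "Sm d 0 (BT d q B i :: 'e jet \<Rightarrow> _)" for i
      unfolding BT_def by (rule Sm_fillL_proj) (use B in simp)
    have SmB: "Sm d 0 (sumG {1..<d} (BT d q B) :: 'e jet \<Rightarrow> _)" by (rule Sm_sumG) (auto intro: SmBT)
    have "Sm d 0 (sumG (UNIV::bool set) (\<lambda>b. if b then FT d p F else sumG {1..<d} (BT d q B)) :: 'e jet \<Rightarrow> _)"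
      by (rule Sm_sumG) (use SmFT SmB in auto)
    then show ?thesis
      by (rule Sm_cong[OF _ _ fS depP]) (simp add: PB FT_eq BT_eq[simplified] lift_def sumG_bool)
  qed
  fix ks assume ks: "set ks \<subseteq> mindex d" and nz: "DnzA 0 ks (lift P)"
  show "sum_list (map w ks) \<le> real p * max 0 (w (zero_mi d)) \<or>
      (odd p \<and> q = (p - 1) div 2 \<and> (\<exists>i\<in>{1..<d}. sum_list (map w ks) \<le> max 0 (w (unit_mi d i)) + real q * max 0 (w (zero_mi d))))"
  proof (cases "P = Fterm d p F")
    case True
    have "DnzA 0 ks (FT d p F :: 'e jet \<Rightarrow> _)"
      by (rule DnzA_cong[OF nz]) (simp add: True FT_eq lift_def)
    then show ?thesis using bFT ks by blast
  next
    case False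
    then have B: "\<forall>i. multilin (q + 1) (B i)" and PB: "P = (\<lambda>\<phi>. Fterm d p F \<phi> + Bterm d q B \<phi>)"
      and pq: "odd p" "q = (p - 1) div 2" using P by auto
    have SmBT: "Sm d 0 (BT d q B i :: 'e jet \<Rightarrow> _)" for i
      unfolding BT_def by (rule Sm_fillL_proj) (use B in simp)
    have SmB: "Sm d 0 (sumG {1..<d} (BT d q B) :: 'e jet \<Rightarrow> _)" by (rule Sm_sumG) (auto intro: SmBT)
    have nzs: "DnzA 0 ks (sumG (UNIV::bool set) (\<lambda>b. if b then FT d p F else sumG {1..<d} (BT d q B)) :: 'e jet \<Rightarrow> _)"
      by (rule DnzA_cong[OF nz]) (simp add: PB FT_eq BT_eq[simplified] lift_def sumG_bool)
    have FD: "\<And>b. b \<in> (UNIV::bool set) \<Longrightarrow> SmD d 0 ((if b then FT d p F else sumG {1..<d} (BT d q B)) :: 'e jet \<Rightarrow> _)"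
      using Sm_SmD[OF SmFT] Sm_SmD[OF SmB] by simp
    have "\<exists>b\<in>(UNIV::bool set). DnzA 0 ks ((if b then FT d p F else sumG {1..<d} (BT d q B)) :: 'e jet \<Rightarrow> _)"
      by (rule DnzA_sumG[OF FD ks nzs])
    then obtain b where b: "DnzA 0 ks ((if b then FT d p F else sumG {1..<d} (BT d q B)) :: 'e jet \<Rightarrow> _)"
      by blast
    show ?thesis
    proof (cases b)
      case True
      then show ?thesis using b bFT ks by simp
    next
      case False
      then have nzs2: "DnzA 0 ks (sumG {1..<d} (BT d q B) :: 'e jet \<Rightarrow> _)" using b by simp
      have FD2: "\<And>i. i \<in> {1..<d} \<Longrightarrow> SmD d 0 (BT d q B i :: 'e jet \<Rightarrow> _)"
        by (rule Sm_SmD[OF SmBT])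
      have "\<exists>i\<in>{1..<d}. DnzA 0 ks (BT d q B i :: 'e jet \<Rightarrow> _)"
        by (rule DnzA_sumG[OF FD2 ks nzs2])
      then obtain i where i: "i \<in> {1..<d}" "DnzA 0 ks (BT d q B i :: 'e jet \<Rightarrow> _)"
        by blast
      have lB: "multilin (length (unit_mi d i # replicate q (zero_mi d))) (B i)" using B by simp
      have "sum_list (map w ks) \<le> max 0 (w (unit_mi d i)) + real q * max 0 (w (zero_mi d))"
        using DnzA_fillL_proj[OF lB ks, of w] i(2) by (simp add: BT_def sum_list_replicate)
      then show ?thesis using i(1) pq by blast
    qed
  qed
qed


definition cw :: "nat \<Rightarrow> real" where "cw i = (if i = 0 then 2 else 1)"

lemma sum_list_update_Suc: "i < length xs \<Longrightarrow> sum_list (xs[i := Suc (xs ! i)]) = Suc (sum_list (xs::nat list))"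
  by (induction xs arbitrary: i) (auto split: nat.splits)

lemma sdeg_add_unit:
  assumes "length l = d" "i < d"
  shows "real (sdeg (add_unit i l)) = real (sdeg l) + cw i"
proof (cases l)
  case Nil then show ?thesis using assms by simp
next
  case (Cons x xs)
  show ?thesis
  proof (cases i)
    case 0 then show ?thesis using Cons by (simp add: add_unit_def sdeg_def cw_def)
  next
    case (Suc i')
    then have "i' < length xs" using assms Cons by simp
    then have "sum_list (xs[i' := Suc (xs ! i')]) = Suc (sum_list xs)" by (rule sum_list_update_Suc)
    then show ?thesis using Cons Suc by (simp add: add_unit_def sdeg_def cw_def)
  qed
qed

lemma sdeg_sum:
  assumes "length k = d"
  shows "real (sdeg k) = (\<Sum>i\<leftarrow>[0..<d]. real (k ! i) * cw i)"
proof (cases k)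
  case Nil then show ?thesis using assms by (simp add: sdeg_def)
next
  case (Cons x xs)
  then have d: "d = Suc (length xs)" using assms by simp
  have "(\<Sum>i\<leftarrow>[0..<d]. real (k ! i) * cw i) = (\<Sum>i\<in>{0..<Suc (length xs)}. real (k ! i) * cw i)"
    by (simp add: d sum_set_upt_conv_sum_list_nat[symmetric] del: upt_Suc)
  also have "\<dots> = real (k ! 0) * cw 0 + (\<Sum>i\<in>{0..<length xs}. real (k ! Suc i) * cw (Suc i))"
    by (subst sum.atLeast0_lessThan_Suc_shift) (simp add: o_def)
  also have "\<dots> = 2 * real x + (\<Sum>i\<in>{0..<length xs}. real (xs ! i))"
    using Cons by (simp add: cw_def)
  also have "(\<Sum>i\<in>{0..<length xs}. real (xs ! i)) = real (sum_list xs)"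
    by (simp add: sum_list_sum_nth)
  finally show ?thesis using Cons by (simp add: sdeg_def)
qed

subsection \<open>The main bound on trees\<close>

fun V :: "real \<Rightarrow> real \<Rightarrow> real \<Rightarrow> tree \<Rightarrow> real" where
  "V a W0 Wf (Node k j cs) = (if j = 0 then W0 else Wf) + real (sdeg k)
     + sum_list (map (\<lambda>c. V a W0 Wf (snd c) - (a + real (sdeg (fst c)))) cs)"

lemma tree_main:
  fixes P :: "'e::euclidean_space jet \<Rightarrow> 'e" and f :: "nat \<Rightarrow> 'e jet \<Rightarrow> 'e" and a W0 Wf :: real
  assumes a: "a \<ge> -1"
    and SP: "Sm d 0 (lift P)"
    and WP: "\<And>ks. set ks \<subseteq> mindex d \<Longrightarrow> DnzA 0 ks (lift P) \<Longrightarrow> sum_list (map (\<lambda>l. a + real (sdeg l)) ks) \<le> W0"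
    and Sf: "\<And>j. j \<in> {1..n} \<Longrightarrow> Sm d 0 (lift (f j))"
    and Wf: "\<And>j ks. j \<in> {1..n} \<Longrightarrow> set ks \<subseteq> mindex d \<Longrightarrow> DnzA 0 ks (lift (f j)) \<Longrightarrow>
               sum_list (map (\<lambda>l. a + real (sdeg l)) ks) \<le> Wf"
  shows "conforming d n P f \<tau> \<Longrightarrow> Sm d 0 (lift (Ups d P f \<tau>)) \<and>
    (\<forall>ks. set ks \<subseteq> mindex d \<longrightarrow> DnzA 0 ks (lift (Ups d P f \<tau>)) \<longrightarrow>
       sum_list (map (\<lambda>l. a + real (sdeg l)) ks) \<le> V a W0 Wf \<tau>)"
proof (induction \<tau>)
  case (Node k j cs)
  define w where "w = (\<lambda>l. a + real (sdeg l))"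
  have conf: "k \<in> mindex d" "j \<le> n" "set (map fst cs) \<subseteq> mindex d"
      "\<And>c. c \<in> set cs \<Longrightarrow> conforming d n P f (snd c)"
    using Node.prems by auto
  have IH: "\<And>c. c \<in> set cs \<Longrightarrow> Sm d 0 (lift (Ups d P f (snd c))) \<and>
      (\<forall>ks. set ks \<subseteq> mindex d \<longrightarrow> DnzA 0 ks (lift (Ups d P f (snd c))) \<longrightarrow> sum_list (map w ks) \<le> V a W0 Wf (snd c))"
  proof -
    fix c assume c: "c \<in> set cs"
    have "snd c \<in> Basic_BNFs.snds c" by (cases c) (simp add: prod_set_simps)
    from Node.IH[OF c this conf(4)[OF c]]
    show "Sm d 0 (lift (Ups d P f (snd c))) \<and>
      (\<forall>ks. set ks \<subseteq> mindex d \<longrightarrow> DnzA 0 ks (lift (Ups d P f (snd c))) \<longrightarrow> sum_list (map w ks) \<le> V a W0 Wf (snd c))"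
      unfolding w_def .
  qed
  define base :: "'e jet \<Rightarrow> 'e" where "base = Ups_base P f j"
  define Wj where "Wj = (if j = 0 then W0 else Wf)"
  have Sbase: "Sm d 0 (lift base)"
    using SP Sf conf(2) by (cases "j = 0") (auto simp: base_def Ups_base_def)
  have Wbase: "sum_list (map w ks) \<le> Wj" if "set ks \<subseteq> mindex d" "DnzA 0 ks (lift base)" for ks
  proof (cases "j = 0")
    case True then show ?thesis using WP[OF that(1)] that(2) by (simp add: base_def Ups_base_def Wj_def w_def)
  next
    case False
    then have j: "j \<in> {1..n}" using conf(2) by simp
    show ?thesis using Wf[OF j that(1)] that(2) False by (simp add: base_def Ups_base_def Wj_def w_def)
  qed
  define kk where "kk = map fst cs"
  define N0 where "N0 = Dks kk (lift base)"
  define N where "N = foldr (\<lambda>i H. (pd d i ^^ (k ! i)) H) [0..<d] N0"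
  define Hs where "Hs = map (\<lambda>c. Ups d P f (snd c)) cs"
  define Fl where "Fl = fillL N Hs"
  have lkk: "length kk = length cs" and lHs: "length Hs = length cs" by (simp_all add: kk_def Hs_def)
  have SN0: "Sm d (length cs) N0" using Sm_Dks[OF Sbase conf(3)] by (simp add: N0_def kk_def)
  have SN: "Sm d (length cs) N" unfolding N_def by (rule Sm_foldr_pd[OF SN0])
  have SFl: "Sm d 0 Fl" unfolding Fl_def
    by (rule Sm_fillL) (use SN lHs IH in \<open>auto simp: Hs_def\<close>)
  have U: "Ups d P f (Node k j cs) \<phi> = Fl \<phi> []" for \<phi>
    unfolding Fl_def fillL_eq Hs_def N_def N0_def kk_def base_def by (simp add: pdk_def o_def)
  have eqU: "\<And>\<phi> xs. length xs = 0 \<Longrightarrow> Fl \<phi> xs = lift (Ups d P f (Node k j cs)) \<phi> xs"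
    by (simp add: U lift_def del: Ups.simps)
  obtain S where S: "finite S" "dep S Fl" using SFl unfolding Sm_def by blast
  have depU: "dep S (lift (Ups d P f (Node k j cs)))"
    using S(2) unfolding dep_def lift_def U by metis
  have SU: "Sm d 0 (lift (Ups d P f (Node k j cs)))" by (rule Sm_cong[OF SFl eqU S(1) depU])
  have bound: "sum_list (map w ks) \<le> V a W0 Wf (Node k j cs)"
    if ks: "set ks \<subseteq> mindex d" and nz: "DnzA 0 ks (lift (Ups d P f (Node k j cs)))" for ks
  proof -
    have nzF: "DnzA 0 ks Fl" by (rule DnzA_cong[OF nz]) (simp add: U lift_def del: Ups.simps)
    define HBs where "HBs = map (\<lambda>c. (Ups d P f (snd c), V a W0 Wf (snd c))) cs"
    have HB1: "map fst HBs = Hs" and HB2: "length HBs = length cs"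
      and HB3: "map snd HBs = map (\<lambda>c. V a W0 Wf (snd c)) cs"
      by (simp_all add: HBs_def Hs_def o_def)
    have "\<exists>ks0. set ks0 \<subseteq> set ks \<and> DnzA (0 + length HBs) ks0 N \<and>
       sum_list (map w ks) \<le> sum_list (map w ks0) + sum_list (map snd HBs)"
    proof (rule DnzA_fillL_w)
      show "Sm d (0 + length HBs) N" using SN HB2 by simp
      show "\<forall>Hb\<in>set HBs. Sm d 0 (lift (fst Hb)) \<and>
          (\<forall>ks. set ks \<subseteq> mindex d \<longrightarrow> DnzA 0 ks (lift (fst Hb)) \<longrightarrow> sum_list (map w ks) \<le> snd Hb)"
        using IH by (auto simp: HBs_def)
      show "set ks \<subseteq> mindex d" by fact
      show "DnzA 0 ks (fillL N (map fst HBs))" using nzF HB1 by (simp add: Fl_def)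
    qed
    then obtain ks0 where k0: "set ks0 \<subseteq> set ks" "DnzA (length cs) ks0 N"
        "sum_list (map w ks) \<le> sum_list (map w ks0) + sum_list (map (\<lambda>c. V a W0 Wf (snd c)) cs)"
      using HB2 HB3 by auto
    have sk0: "set ks0 \<subseteq> mindex d" using k0(1) ks by auto
    have hw: "\<And>i l. i \<in> set [0..<d] \<Longrightarrow> l \<in> mindex d \<Longrightarrow> 0 \<le> w l + cw i \<and> w (add_unit i l) \<le> w l + cw i"
    proof -
      fix i l assume i: "i \<in> set [0..<d]" and l: "l \<in> mindex d"
      have "cw i \<ge> 1" by (simp add: cw_def)
      moreover have "real (sdeg (add_unit i l)) = real (sdeg l) + cw i"
        using sdeg_add_unit[of l d i] i l by (simp add: mindex_def)
      ultimately show "0 \<le> w l + cw i \<and> w (add_unit i l) \<le> w l + cw i" using a by (simp add: w_def)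
    qed
    obtain ks' where k': "set ks' \<subseteq> mindex d" "DnzA (length cs) ks' N0"
        "sum_list (map w ks0) \<le> sum_list (map w ks') + sum_list (map (\<lambda>i. real (k ! i) * cw i) [0..<d])"
      using DnzA_foldr_pd_w[OF SN0 hw sk0] k0(2) unfolding N_def by blast
    have sk: "sum_list (map (\<lambda>i. real (k ! i) * cw i) [0..<d]) = real (sdeg k)"
      using sdeg_sum[of k d] conf(1) by (simp add: mindex_def del: upt_Suc)
    have "DnzA (0 + length kk) ks' (Dks kk (lift base))" using k'(2) lkk by (simp add: N0_def)
    then have "DnzA 0 (ks' @ kk) (lift base)" by (rule DnzA_Dks_gen)
    then have "sum_list (map w (ks' @ kk)) \<le> Wj" by (rule Wbase[rotated]) (use k'(1) conf(3) in \<open>simp add: kk_def\<close>)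
    then have "sum_list (map w ks') \<le> Wj - sum_list (map w kk)" by simp
    moreover have "V a W0 Wf (Node k j cs) = Wj + real (sdeg k) + sum_list (map (\<lambda>c. V a W0 Wf (snd c)) cs)
        - sum_list (map w kk)"
      by (simp add: Wj_def w_def kk_def sum_list_subtractf o_def)
    ultimately show ?thesis using k0(3) k'(3) sk by linarith
  qed
  show ?case using SU bound unfolding w_def by blast
qed


fun Nr :: "tree \<Rightarrow> real" where
  "Nr (Node k j cs) = (if j \<ge> 1 then 1 else 0) + sum_list (map (\<lambda>c. Nr (snd c)) cs)"

lemma tree_ind:
  assumes "\<And>k j cs. (\<And>c. c \<in> set cs \<Longrightarrow> Q (snd c)) \<Longrightarrow> Q (Node k j cs)"
  shows "Q \<tau>"
proof (induction \<tau>)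
  case (Node k j cs)
  show ?case
  proof (rule assms)
    fix c assume c: "c \<in> set cs"
    have "snd c \<in> Basic_BNFs.snds c" by (cases c) (simp add: prod_set_simps)
    then show "Q (snd c)" using Node.IH[OF c] by blast
  qed
qed

lemma Nr_nonneg: "Nr \<tau> \<ge> 0"
proof (induction \<tau> rule: tree_ind)
  case (1 k j cs)
  have "0 \<le> sum_list (map (\<lambda>c. Nr (snd c)) cs)" using 1 by (intro sum_list_nonneg) auto
  then show ?case by simp
qed

lemma le_sum_list_nonneg:
  fixes f :: "'a \<Rightarrow> real"
  shows "(\<And>x. x \<in> set xs \<Longrightarrow> 0 \<le> f x) \<Longrightarrow> c \<in> set xs \<Longrightarrow> f c \<le> sum_list (map f xs)"
proof (induction xs)
  case Nil then show ?case by simp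
next
  case (Cons y ys)
  have "0 \<le> sum_list (map f ys)" using Cons.prems(1) by (intro sum_list_nonneg) auto
  moreover have "0 \<le> f y" using Cons.prems(1) by simp
  moreover have "c \<in> set ys \<Longrightarrow> f c \<le> sum_list (map f ys)" using Cons by auto
  ultimately show ?case using Cons.prems(2) by force
qed

lemma Nr_child: "c \<in> set cs \<Longrightarrow> Nr (snd c) \<le> Nr (Node k j cs)"
proof -
  assume c: "c \<in> set cs"
  have "Nr (snd c) \<le> sum_list (map (\<lambda>c. Nr (snd c)) cs)"
    using c Nr_nonneg by (intro le_sum_list_nonneg[where f="\<lambda>c. Nr (snd c)"]) auto
  then show ?thesis by simp
qed

lemma sl_lin: "sum_list (map (\<lambda>c. A c + x * B c + y) cs) = sum_list (map A cs) + x * sum_list (map B cs) + y * real (length cs)"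
  by (induction cs) (auto simp: algebra_simps)

lemma hom_Node: "hom \<beta> (Node k j cs) = real (sdeg k) + (if j \<ge> 1 then \<beta> else 0)
   + sum_list (map (\<lambda>c. hom \<beta> (snd c) + 2 - real (sdeg (fst c))) cs)"
  by simp

lemma R1:
  fixes \<alpha> \<beta> :: real
  shows "V \<alpha> (2 + \<alpha>) 0 \<tau> \<le> hom \<beta> \<tau> + 2 + \<alpha> - Nr \<tau> * (\<beta> + 2 + \<alpha>)"
proof (induction \<tau> rule: tree_ind)
  case (1 k j cs)
  let ?g = "\<beta> + 2 + \<alpha>"
  have "sum_list (map (\<lambda>c. V \<alpha> (2 + \<alpha>) 0 (snd c) - (\<alpha> + real (sdeg (fst c)))) cs) \<le>
        sum_list (map (\<lambda>c. (hom \<beta> (snd c) + 2 - real (sdeg (fst c))) + (- ?g) * Nr (snd c) + 0) cs)"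
    using 1 by (intro sum_list_mono) (auto simp: algebra_simps)
  also have "\<dots> = sum_list (map (\<lambda>c. hom \<beta> (snd c) + 2 - real (sdeg (fst c))) cs) - ?g * sum_list (map (\<lambda>c. Nr (snd c)) cs)"
    by (subst sl_lin) (simp add: algebra_simps)
  finally show ?case by (auto simp: algebra_simps)
qed

lemma R23:
  fixes a c \<beta> W0 Wf :: real
  assumes "c \<le> a + 2" "W0 \<le> c" "0 < Nr \<tau> \<longrightarrow> Wf - \<beta> \<le> c"
  shows "V a W0 Wf \<tau> \<le> hom \<beta> \<tau> + c"
  using assms(3)
proof (induction \<tau> rule: tree_ind)
  case (1 k j cs)
  have IH: "V a W0 Wf (snd x) \<le> hom \<beta> (snd x) + c" if "x \<in> set cs" for x
  proof (rule 1(1)[OF that])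
    show "0 < Nr (snd x) \<longrightarrow> Wf - \<beta> \<le> c" using 1(2) Nr_child[OF that, of k j] by auto
  qed
  have "sum_list (map (\<lambda>x. V a W0 Wf (snd x) - (a + real (sdeg (fst x)))) cs) \<le>
        sum_list (map (\<lambda>x. (hom \<beta> (snd x) + 2 - real (sdeg (fst x))) + 0 * 0 + (c - a - 2)) cs)"
    using IH by (intro sum_list_mono) (auto simp: algebra_simps)
  also have "\<dots> = sum_list (map (\<lambda>x. hom \<beta> (snd x) + 2 - real (sdeg (fst x))) cs) + (c - a - 2) * real (length cs)"
    by (subst sl_lin) simp
  finally have A: "sum_list (map (\<lambda>x. V a W0 Wf (snd x) - (a + real (sdeg (fst x)))) cs) \<le>
      sum_list (map (\<lambda>x. hom \<beta> (snd x) + 2 - real (sdeg (fst x))) cs) + (c - a - 2) * real (length cs)" .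
  have B: "(c - a - 2) * real (length cs) \<le> 0" using assms(1) by (simp add: mult_nonpos_nonneg)
  show ?case
  proof (cases "j \<ge> 1")
    case True
    have "0 \<le> sum_list (map (\<lambda>c. Nr (snd c)) cs)" using Nr_nonneg by (intro sum_list_nonneg) auto
    then have "0 < Nr (Node k j cs)" using True by simp
    then have "Wf - \<beta> \<le> c" using 1(2) by simp
    then show ?thesis using A B True by simp
  next
    case False
    then show ?thesis using A B assms(2) by simp
  qed
qed


lemma sum_list_replicate_upd: "i < n \<Longrightarrow> sum_list ((replicate n (0::nat))[i := Suc 0]) = Suc 0"
  by (induction n arbitrary: i) (auto split: nat.splits)

lemma sdeg_zero: "sdeg (zero_mi d) = 0"
  by (cases d) (simp_all add: sdeg_def zero_mi_def)

lemma sdeg_unit: "1 \<le> i \<Longrightarrow> i < d \<Longrightarrow> sdeg (unit_mi d i) = 1"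
proof -
  assume i: "1 \<le> i" "i < d"
  then obtain d' i' where d: "d = Suc d'" and i': "i = Suc i'" by (cases d; cases i) auto
  have "i' < d'" using i d i' by simp
  then show ?thesis using d i' by (simp add: sdeg_def unit_mi_def sum_list_replicate_upd)
qed

lemma sum_w: "sum_list (map (\<lambda>l. a + real (sdeg l)) ks) = a * real (length ks) + real (sdeg_list ks)"
  by (induction ks) (auto simp: sdeg_list_def algebra_simps)

lemma sum_w_nonpos:
  assumes "\<forall>l\<in>set ks. sdeg l \<le> 1"
  shows "sum_list (map (\<lambda>l. -1 + real (sdeg l)) ks) \<le> 0"
  using assms by (induction ks) auto

lemma Jidx_sdeg: "l \<in> Jidx d \<Longrightarrow> sdeg l \<le> 1"
  by (simp add: Jidx_def)

theorem lemma6: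
  fixes d n p q :: nat
    and \<beta> :: real
    and F :: "'e::euclidean_space list \<Rightarrow> 'e"
    and B :: "nat \<Rightarrow> 'e list \<Rightarrow> 'e"
    and P :: "'e jet \<Rightarrow> 'e"
    and f :: "nat \<Rightarrow> 'e jet \<Rightarrow> 'e"
    and \<tau> :: tree
    and ks :: "mi list"
  assumes "d \<ge> 2" and "n \<ge> 1" and "\<beta> < 0"
    and "p \<ge> 2" and "multilin p F"
    and "P = Fterm d p F \<or>
         (odd p \<and> q = (p - 1) div 2 \<and> (\<forall>i. multilin (q + 1) (B i)) \<and>
          P = (\<lambda>\<phi>. Fterm d p F \<phi> + Bterm d q B \<phi>))"
    and "\<forall>j\<in>{1..n}. smooth_jet d (f j) \<and> on_J d (f j)"
    and "f_const n f \<longrightarrow> \<beta> > - (2 / (real p - 1)) - 2"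
    and "\<not> f_const n f \<and> f_indep_grad d n f \<longrightarrow> \<beta> > -2"
    and "\<not> f_indep_grad d n f \<longrightarrow> \<beta> > -1"
    and "conforming d n P f \<tau>"
    and "set ks \<subseteq> mindex d" and "length ks \<ge> 1"
    and "Dnonzero ks (lift (Ups d P f \<tau>))"
    and "length ks = 1 \<or> \<beta> \<le> -1"
  shows "hom \<beta> \<tau> > real (sdeg_list ks) - 2"
proof -
  have nz: "DnzA 0 ks (lift (Ups d P f \<tau>))" using assms(14) by (simp add: Dnonzero_DnzA)
  have SP: "Sm d 0 (lift P)" by (rule P_props(1)[OF assms(5) assms(6)])
  have BP: "\<And>w ks. set ks \<subseteq> mindex d \<Longrightarrow> DnzA 0 ks (lift P) \<Longrightarrow>
      sum_list (map w ks) \<le> real p * max 0 (w (zero_mi d)) \<or>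
      (odd p \<and> q = (p - 1) div 2 \<and> (\<exists>i\<in>{1..<d}. sum_list (map w ks) \<le> max 0 (w (unit_mi d i)) + real q * max 0 (w (zero_mi d))))"
    by (rule P_props(2)[OF assms(5) assms(6)])
  have Sf: "\<And>j. j \<in> {1..n} \<Longrightarrow> Sm d 0 (lift (f j))"
  proof -
    fix j assume "j \<in> {1..n}"
    then have "smooth_jet d (f j)" "on_J d (f j)" using assms(7) by auto
    then show "Sm d 0 (lift (f j))" by (rule Sm_f)
  qed
  have fJ: "set ks' \<subseteq> Jidx d" if "j \<in> {1..n}" "DnzA 0 ks' (lift (f j))" for j ks'
  proof -
    have "on_J d (f j)" using assms(7) that(1) by auto
    then have "dep (Jidx d) (lift (f j))" by (rule dep_on_J)
    then show ?thesis using that(2) by (rule dep_DnzA)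
  qed
  have TM: "a * real (length ks) + real (sdeg_list ks) \<le> V a W0 Wf \<tau>"
    if h1: "a \<ge> -1"
      and h2: "\<And>ks. set ks \<subseteq> mindex d \<Longrightarrow> DnzA 0 ks (lift P) \<Longrightarrow> sum_list (map (\<lambda>l. a + real (sdeg l)) ks) \<le> W0"
      and h3: "\<And>j ks. j \<in> {1..n} \<Longrightarrow> set ks \<subseteq> mindex d \<Longrightarrow> DnzA 0 ks (lift (f j)) \<Longrightarrow>
               sum_list (map (\<lambda>l. a + real (sdeg l)) ks) \<le> Wf"
    for a W0 Wf
  proof -
    have "Sm d 0 (lift (Ups d P f \<tau>)) \<and>
      (\<forall>ks. set ks \<subseteq> mindex d \<longrightarrow> DnzA 0 ks (lift (Ups d P f \<tau>)) \<longrightarrow>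
       sum_list (map (\<lambda>l. a + real (sdeg l)) ks) \<le> V a W0 Wf \<tau>)"
      by (rule tree_main[OF h1 SP h2 Sf h3 assms(11)])
    then have "sum_list (map (\<lambda>l. a + real (sdeg l)) ks) \<le> V a W0 Wf \<tau>" using nz assms(12) by blast
    then show ?thesis by (simp add: sum_w)
  qed
  have PBm1: "sum_list (map (\<lambda>l. -1 + real (sdeg l)) ks') \<le> 0"
    if "set ks' \<subseteq> mindex d" "DnzA 0 ks' (lift P)" for ks'
  proof -
    have u: "\<And>i. i \<in> {1..<d} \<Longrightarrow> sdeg (unit_mi d i) = 1" by (simp add: sdeg_unit)
    show ?thesis using BP[OF that, of "\<lambda>l. -1 + real (sdeg l)"] by (auto simp: sdeg_zero u)
  qed
  have PB0: "sum_list (map (\<lambda>l. 0 + real (sdeg l)) ks') \<le> 1"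
    if "set ks' \<subseteq> mindex d" "DnzA 0 ks' (lift P)" for ks'
  proof -
    have u: "\<And>i. i \<in> {1..<d} \<Longrightarrow> sdeg (unit_mi d i) = 1" by (simp add: sdeg_unit)
    show ?thesis using BP[OF that, of "\<lambda>l. 0 + real (sdeg l)"] by (auto simp: sdeg_zero u)
  qed
  have hs: "real (sdeg_list ks) \<ge> 0" by simp
  have L1: "real (length ks) \<ge> 1" using assms(13) by simp
  show ?thesis
  proof (cases "f_const n f")
    case True
    define \<alpha> where "\<alpha> = 2 / (real p - 1)"
    have p1: "real p - 1 > 0" using assms(4) by simp
    have apos: "\<alpha> > 0" using p1 by (simp add: \<alpha>_def)
    have pa: "real p * \<alpha> = 2 + \<alpha>" using p1 by (simp add: \<alpha>_def field_simps)
    have bet: "\<beta> > - \<alpha> - 2" using assms(8) True by (simp add: \<alpha>_def)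
    have fks: "ks' = []" if "j \<in> {1..n}" "DnzA 0 ks' (lift (f j))" for j ks'
    proof -
      have "dep {} (lift (f j))" using True that(1) unfolding f_const_def dep_def lift_def by auto
      then have "set ks' \<subseteq> {}" by (rule dep_DnzA[OF _ that(2)])
      then show ?thesis by simp
    qed
    have fb: "sum_list (map (\<lambda>l. a + real (sdeg l)) ks') \<le> 0"
      if "j \<in> {1..n}" "set ks' \<subseteq> mindex d" "DnzA 0 ks' (lift (f j))" for a j ks'
      using fks[OF that(1) that(3)] by simp
    show ?thesis
    proof (cases "Nr \<tau> > 0 \<or> length ks \<ge> 2")
      case True
      have PBa: "sum_list (map (\<lambda>l. \<alpha> + real (sdeg l)) ks') \<le> 2 + \<alpha>"
        if "set ks' \<subseteq> mindex d" "DnzA 0 ks' (lift P)" for ks'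
      proof -
        have u: "\<And>i. i \<in> {1..<d} \<Longrightarrow> sdeg (unit_mi d i) = 1" by (simp add: sdeg_unit)
        have B2: "max 0 (\<alpha> + 1) + real q * max 0 \<alpha> = 2 + \<alpha>" if "odd p" "q = (p - 1) div 2"
        proof -
          have "real p - 1 = 2 * real q" using that by (auto elim!: oddE)
          then have "real q * \<alpha> = 1" using p1 by (simp add: \<alpha>_def field_simps)
          then show ?thesis using apos by simp
        qed
        show ?thesis using BP[OF that, of "\<lambda>l. \<alpha> + real (sdeg l)"] apos pa B2
          by (auto simp: sdeg_zero u)
      qed
      have "\<alpha> * real (length ks) + real (sdeg_list ks) \<le> V \<alpha> (2 + \<alpha>) 0 \<tau>"
        by (rule TM[OF _ PBa fb]) (use apos in simp)
      also have "\<dots> \<le> hom \<beta> \<tau> + 2 + \<alpha> - Nr \<tau> * (\<beta> + 2 + \<alpha>)" by (rule R1)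
      finally have A: "\<alpha> * real (length ks) + real (sdeg_list ks) \<le> hom \<beta> \<tau> + 2 + \<alpha> - Nr \<tau> * (\<beta> + 2 + \<alpha>)" .
      have g: "\<beta> + 2 + \<alpha> > 0" using bet by simp
      have N0: "Nr \<tau> \<ge> 0" by (rule Nr_nonneg)
      have "Nr \<tau> * (\<beta> + 2 + \<alpha>) + \<alpha> * (real (length ks) - 1) > 0"
      proof (cases "Nr \<tau> > 0")
        case True
        then have "Nr \<tau> * (\<beta> + 2 + \<alpha>) > 0" using g by simp
        moreover have "\<alpha> * (real (length ks) - 1) \<ge> 0" using apos L1 by simp
        ultimately show ?thesis by linarith
      next
        case False
        then have "length ks \<ge> 2" using \<open>Nr \<tau> > 0 \<or> length ks \<ge> 2\<close> by simp
        then have "\<alpha> * (real (length ks) - 1) > 0" using apos by simp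
        moreover have "Nr \<tau> * (\<beta> + 2 + \<alpha>) \<ge> 0" using N0 g by simp
        ultimately show ?thesis by linarith
      qed
      then show ?thesis using A by (simp add: algebra_simps)
    next
      case False
      then have Nz: "\<not> 0 < Nr \<tau>" and l1: "length ks = 1" using assms(13) by auto
      have "-1 * real (length ks) + real (sdeg_list ks) \<le> V (-1) 0 0 \<tau>"
        by (rule TM[OF _ PBm1 fb]) simp
      also have "\<dots> \<le> hom \<beta> \<tau> + 0" by (rule R23) (use Nz in auto)
      finally show ?thesis using l1 by simp
    qed
  next
    case False
    show ?thesis
    proof (cases "f_indep_grad d n f")
      case True
      have bet: "\<beta> > -2" using assms(9) True False by simp
      have fks: "sum_list (map (\<lambda>l. 0 + real (sdeg l)) ks') \<le> 0"
        if "j \<in> {1..n}" "set ks' \<subseteq> mindex d" "DnzA 0 ks' (lift (f j))" for j ks'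
      proof -
        have "dep {zero_mi d} (lift (f j))" unfolding dep_def lift_def
        proof (intro allI impI)
          fix \<phi> \<psi> :: "'e jet" assume "\<forall>l\<in>{zero_mi d}. \<phi> l = \<psi> l"
          then have "\<phi> (zero_mi d) = \<psi> (zero_mi d)" by simp
          then have "f j \<phi> = f j \<psi>" using True that(1) unfolding f_indep_grad_def by blast
          then show "(\<lambda>hs. f j \<phi>) = (\<lambda>hs. f j \<psi>)" by simp
        qed
        then have "set ks' \<subseteq> {zero_mi d}" by (rule dep_DnzA[OF _ that(3)])
        then have "\<forall>l\<in>set ks'. sdeg l = 0" by (auto simp: sdeg_zero)
        then show ?thesis by (induction ks') auto
      qed
      define c where "c = max 1 (- \<beta>)"
      have "0 * real (length ks) + real (sdeg_list ks) \<le> V 0 1 0 \<tau>"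
        by (rule TM[OF _ PB0 fks]) simp
      also have "\<dots> \<le> hom \<beta> \<tau> + c" by (rule R23) (use bet in \<open>auto simp: c_def\<close>)
      finally have "real (sdeg_list ks) \<le> hom \<beta> \<tau> + c" by simp
      moreover have "c < 2" using bet by (simp add: c_def)
      ultimately show ?thesis by simp
    next
      case False
      have bet: "\<beta> > -1" using assms(10) False by simp
      then have l1: "length ks = 1" using assms(15) by auto
      have fks: "sum_list (map (\<lambda>l. -1 + real (sdeg l)) ks') \<le> 0"
        if "j \<in> {1..n}" "set ks' \<subseteq> mindex d" "DnzA 0 ks' (lift (f j))" for j ks'
      proof -
        have "set ks' \<subseteq> Jidx d" using fJ[OF that(1) that(3)] .
        then show ?thesis by (intro sum_w_nonpos) (auto simp: Jidx_def)
      qed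
      define c where "c = max 0 (- \<beta>)"
      have "-1 * real (length ks) + real (sdeg_list ks) \<le> V (-1) 0 0 \<tau>"
        by (rule TM[OF _ PBm1 fks]) simp
      also have "\<dots> \<le> hom \<beta> \<tau> + c" by (rule R23) (use bet in \<open>auto simp: c_def\<close>)
      finally have "real (sdeg_list ks) \<le> hom \<beta> \<tau> + c + 1" using l1 by simp
      moreover have "c < 1" using bet by (simp add: c_def)
      ultimately show ?thesis by simp
    qed
  qed
qed

end
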